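(* Let $w_1,\dots,w_n\in\{1,\dots,N\}$ be distinct and let $V_\bullet$ be the permutation flag $V_j=\mathrm{span}(e_{w_1},\dots,e_{w_j})$, and suppose $V_\bullet\in Y$. Then there is a unique $b\in\{1,\dots,n\}$ with $w_b\ge n$, and $\{w_l: l\neq b\}=\{1,\dots,n-1\}$. Moreover, for every admissible $i$: (1) if $w_b\le 2n-2$, let $a$ be the index with $w_a=w_b-(n-1)$ (necessarily $a<b$); then $V_\bullet\in K^i$ if and only if $a<i\le b$; (2) if $w_b\ge 2n-1$, then $V_\bullet\in K^i$ if and only if $i\le b$.
   Context: Fix integers $n\ge 2$ and $s\ge n-1$, let $N=n+s-1$, and let $e_1,\dots,e_N$ be the standard basis of $\mathbb{C}^N$. Let $x:\mathbb{C}^N\to\mathbb{C}^N$ be the linear map with $xe_m=e_{m-(n-1)}$ for $n\le m\le 2n-2$ and $xe_m=0$ otherwise; thus $\mathrm{im}(x)=\mathrm{span}(e_1,\dots,e_{n-1})$. $\mathrm{Fl}(1^n,s-1)$ is the variety of partial flags $V_\bullet=(0=V_0\subset V_1\subset\cdots\subset V_n\subset\mathbb{C}^N)$ with $\dim V_j=j$. The $\Delta$-Springer fiber is $Y=\{V_\bullet\in\mathrm{Fl}(1^n,s-1)\mid \mathrm{im}(x)\subseteq V_n,\ xV_j\subseteq V_j \text{ for all } j\}$. For distinct $w_1,\dots,w_n\in\{1,\dots,N\}$, the Schubert cell $X_w^\circ$ is the set of flags with $\dim(V_j\cap\mathrm{span}(e_1,\dots,e_m))=\#\{l\le j: w_l\le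 m\}$ for all $j,m$. An index $i$ is admissible if $1\le i\le n$ when $s>n-1$, and $2\le i\le n$ when $s=n-1$. For admissible $i$ put $w^{(i)}=(n-1,n-2,\dots,n-i+1,\,N,\,n-i,\dots,1)$ and let $K^i$ be the closure in $Y$ of $X^\circ_{w^{(i)}}\cap Y$ (the irreducible components of $Y$). *)

theory Defs
  imports "HOL-Analysis.Analysis" "HOL-Library.Function_Algebras"
begin

text \<open>Vectors of C^N are modelled as functions nat => complex vanishing outside {1..N}.\<close>

type_synonym cvec = "nat \<Rightarrow> complex"

definition cscale :: "complex \<Rightarrow> cvec \<Rightarrow> cvec" where
  "cscale c v = (\<lambda>k. c * v k)"

abbreviation cspan :: "cvec set \<Rightarrow> cvec set" where
  "cspan \<equiv> module.span cscale"

abbreviation csubspace :: "cvec set \<Rightarrow> bool" where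
  "csubspace \<equiv> module.subspace cscale"

abbreviation cdependent :: "cvec set \<Rightarrow> bool" where
  "cdependent \<equiv> module.dependent cscale"

abbreviation cdim :: "cvec set \<Rightarrow> nat" where
  "cdim \<equiv> vector_space.dim cscale"

definition CN :: "nat \<Rightarrow> cvec set" where
  "CN N = {v. \<forall>k. k \<notin> {1..N} \<longrightarrow> v k = 0}"

definition ebas :: "nat \<Rightarrow> cvec" where
  "ebas m = (\<lambda>k. if k = m then 1 else 0)"

text \<open>The nilpotent map x: x e_m = e_{m-(n-1)} for n <= m <= 2n-2, x e_m = 0 otherwise.\<close>
definition xmap :: "nat \<Rightarrow> cvec \<Rightarrow> cvec" where
  "xmap n v = (\<lambda>k. if 1 \<le> k \<and> k \<le> n - 1 then v (k + (n - 1)) else 0)"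

text \<open>Partial flags V_0 \<subset> V_1 \<subset> ... \<subset> V_n in C^N with dim V_j = j.  A flag is a function
  j \<mapsto> V_j, normalised by V_j = V_n for j > n.\<close>
definition Fl :: "nat \<Rightarrow> nat \<Rightarrow> (nat \<Rightarrow> cvec set) set" where
  "Fl n N = {V. (\<forall>j. V j = V (min j n))
     \<and> (\<forall>j\<le>n. csubspace (V j) \<and> V j \<subseteq> CN N \<and> cdim (V j) = j)
     \<and> (\<forall>j\<in>{1..n}. V (j - 1) \<subseteq> V j)}"

text \<open>Frames (ordered n-tuples f_1..f_n of linearly independent vectors of C^N) and the flag
  they span; the topology of Fl is the quotient topology of the (Euclidean) frame space.\<close>
definition frames :: "nat \<Rightarrow> nat \<Rightarrow> (nat \<Rightarrow> cvec) set" where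
  "frames n N = {f. (\<forall>l. l \<notin> {1..n} \<longrightarrow> f l = 0) \<and> (\<forall>l\<in>{1..n}. f l \<in> CN N)
      \<and> inj_on f {1..n} \<and> \<not> cdependent (f ` {1..n})}"

definition flag_of :: "nat \<Rightarrow> (nat \<Rightarrow> cvec) \<Rightarrow> (nat \<Rightarrow> cvec set)" where
  "flag_of n f = (\<lambda>j. cspan (f ` {1..min j n}))"

definition flag_top :: "nat \<Rightarrow> nat \<Rightarrow> (nat \<Rightarrow> cvec set) topology" where
  "flag_top n N = topology (\<lambda>U. U \<subseteq> Fl n N \<and>
      openin (top_of_set (frames n N)) {f \<in> frames n N. flag_of n f \<in> U})"

definition DeltaY :: "nat \<Rightarrow> nat \<Rightarrow> (nat \<Rightarrow> cvec set) set" where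
  "DeltaY n s = {V \<in> Fl n (n + s - 1).
      xmap n ` CN (n + s - 1) \<subseteq> V n \<and> (\<forall>j\<le>n. xmap n ` V j \<subseteq> V j)}"

definition Ecoord :: "nat \<Rightarrow> cvec set" where
  "Ecoord m = cspan (ebas ` {1..m})"

definition schubert_cell :: "nat \<Rightarrow> nat \<Rightarrow> (nat \<Rightarrow> nat) \<Rightarrow> (nat \<Rightarrow> cvec set) set" where
  "schubert_cell n N w = {V \<in> Fl n N. \<forall>j\<le>n. \<forall>m\<le>N.
      cdim (V j \<inter> Ecoord m) = card {l \<in> {1..j}. w l \<le> m}}"

definition admissible :: "nat \<Rightarrow> nat \<Rightarrow> nat \<Rightarrow> bool" where
  "admissible n s i = (if s > n - 1 then 1 \<le> i \<and> i \<le> n else 2 \<le> i \<and> i \<le> n)"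

text \<open>w^{(i)} = (n-1, n-2, ..., n-i+1, N, n-i, ..., 1), indexed by 1..n.\<close>
definition wi :: "nat \<Rightarrow> nat \<Rightarrow> nat \<Rightarrow> nat \<Rightarrow> nat" where
  "wi n s i l = (if l < i then n - l else if l = i then n + s - 1 else n + 1 - l)"

definition Kcomp :: "nat \<Rightarrow> nat \<Rightarrow> nat \<Rightarrow> (nat \<Rightarrow> cvec set) set" where
  "Kcomp n s i = (subtopology (flag_top n (n + s - 1)) (DeltaY n s)) closure_of
      (schubert_cell n (n + s - 1) (wi n s i) \<inter> DeltaY n s)"

definition perm_flag :: "nat \<Rightarrow> (nat \<Rightarrow> nat) \<Rightarrow> (nat \<Rightarrow> cvec set)" where
  "perm_flag n w = (\<lambda>j. cspan ((ebas \<circ> w) ` {1..min j n}))"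

end

theory Submission
  imports Defs
begin

lemma cscale_apply: "cscale c v k = c * v k" by (simp add: cscale_def)

global_interpretation cv: vector_space cscale
  by unfold_locales (auto simp: cscale_def algebra_simps fun_eq_iff)

lemma sum_cvec_apply: "(\<Sum>q\<in>I. (F q :: cvec)) k = (\<Sum>q\<in>I. F q k)"
  by (induction I rule: infinite_finite_induct) auto

lemma Ecoord_iff: "v \<in> Ecoord m \<longleftrightarrow> (\<forall>k. k \<notin> {1..m} \<longrightarrow> v k = 0)"
proof
  assume "v \<in> Ecoord m"
  then show "\<forall>k. k \<notin> {1..m} \<longrightarrow> v k = 0"
    unfolding Ecoord_def
    by (induction rule: cv.span_induct_alt) (auto simp: ebas_def cscale_apply)
next
  assume h: "\<forall>k. k \<notin> {1..m} \<longrightarrow> v k = 0"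
  have "v = (\<Sum>q\<in>{1..m}. cscale (v q) (ebas q))"
  proof (rule ext)
    fix x
    have "(\<Sum>q\<in>{1..m}. v q * (if x = q then 1 else 0)) = (\<Sum>q\<in>{1..m}. if x = q then v x else 0)"
      by (rule sum.cong) auto
    also have "\<dots> = v x" using h by (simp add: sum.delta)
    finally show "v x = (\<Sum>q\<in>{1..m}. cscale (v q) (ebas q)) x"
      by (simp add: sum_cvec_apply ebas_def cscale_apply)
  qed
  also have "\<dots> \<in> Ecoord m" unfolding Ecoord_def
    by (intro cv.span_sum cv.span_scale cv.span_base) auto
  finally show "v \<in> Ecoord m" .
qed

lemma CN_Ecoord: "CN N = Ecoord N"
  by (auto simp: CN_def Ecoord_iff)

lemma subspace_Ecoord: "csubspace (Ecoord m)"
  by (simp add: Ecoord_def cv.subspace_span)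

lemma span_index_sum: "(\<Sum>q\<in>I. cscale (\<alpha> q) (f q)) \<in> cspan (f ` I)"
  by (intro cv.span_sum cv.span_scale cv.span_base) auto

lemma span_index:
  assumes "finite I" "v \<in> cspan (f ` I)"
  shows "\<exists>\<alpha>. v = (\<Sum>q\<in>I. cscale (\<alpha> q) (f q))"
proof -
  let ?S = "{v. \<exists>\<alpha>. v = (\<Sum>q\<in>I. cscale (\<alpha> q) (f q))}"
  have "csubspace ?S"
    unfolding cv.subspace_def
  proof (intro conjI allI ballI impI)
    show "0 \<in> ?S" by (rule CollectI, rule exI[of _ "\<lambda>_. 0"]) (simp add: cscale_apply fun_eq_iff sum_cvec_apply)
  next
    fix x y assume "x \<in> ?S" "y \<in> ?S"
    then obtain a b where "x = (\<Sum>q\<in>I. cscale (a q) (f q))" "y = (\<Sum>q\<in>I. cscale (b q) (f q))" by auto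
    then show "x + y \<in> ?S"
      by (intro CollectI exI[of _ "\<lambda>q. a q + b q"]) (simp add: cscale_apply fun_eq_iff sum_cvec_apply sum.distrib algebra_simps)
  next
    fix c x assume "x \<in> ?S"
    then obtain a where "x = (\<Sum>q\<in>I. cscale (a q) (f q))" by auto
    then show "cscale c x \<in> ?S"
      by (intro CollectI exI[of _ "\<lambda>q. c * a q"]) (simp add: cscale_apply fun_eq_iff sum_cvec_apply sum_distrib_left algebra_simps)
  qed
  moreover have "f ` I \<subseteq> ?S"
  proof
    fix x assume "x \<in> f ` I"
    then obtain p where p: "p \<in> I" "x = f p" by auto
    show "x \<in> ?S"
    proof (intro CollectI exI[of _ "\<lambda>q. if q = p then 1 else 0"] ext)
      fix k
      have "(\<Sum>q\<in>I. cscale (if q = p then 1 else 0) (f q) k) = (\<Sum>q\<in>I. if q = p then f p k else 0)"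
        by (rule sum.cong) auto
      then show "x k = (\<Sum>q\<in>I. cscale (if q = p then 1 else 0) (f q)) k"
        using p assms(1) by (simp add: cscale_apply sum_cvec_apply sum.delta)
    qed
  qed
  ultimately have "cspan (f ` I) \<subseteq> ?S" by (rule cv.span_minimal[rotated])
  with assms(2) show ?thesis by auto
qed

lemma span_ebas_coord:
  assumes "v \<in> cspan (ebas ` M)" "k \<notin> M" shows "v k = 0"
  using assms by (induction rule: cv.span_induct_alt) (auto simp: ebas_def cscale_apply split: if_splits)

lemma indep_index:
  assumes fin: "finite I"
    and h: "\<And>\<alpha>. (\<Sum>q\<in>I. cscale (\<alpha> q) (f q)) = 0 \<Longrightarrow> \<forall>q\<in>I. \<alpha> q = 0"
  shows "inj_on f I \<and> \<not> cdependent (f ` I)"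
proof
  show inj: "inj_on f I"
  proof (rule inj_onI, rule ccontr)
    fix p q assume pq: "p \<in> I" "q \<in> I" "f p = f q" "p \<noteq> q"
    let ?a = "\<lambda>r. if r = p then (1::complex) else if r = q then -1 else 0"
    have "(\<Sum>r\<in>I. cscale (?a r) (f r)) = 0"
    proof (rule ext)
      fix k
      have "(\<Sum>r\<in>I. ?a r * f r k) = (\<Sum>r\<in>I. (if r = p then f p k else 0) + (if r = q then - f q k else 0))"
        by (rule sum.cong) (use pq in auto)
      also have "\<dots> = 0" using pq fin by (simp add: sum.distrib sum.delta)
      finally show "(\<Sum>r\<in>I. cscale (?a r) (f r)) k = 0 k" by (simp add: cscale_apply sum_cvec_apply)
    qed
    from h[OF this] pq show False by auto
  qed
  show "\<not> cdependent (f ` I)"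
  proof (rule cv.independent_if_scalars_zero)
    show "finite (f ` I)" using fin by simp
  next
    fix g x assume s: "(\<Sum>x\<in>f ` I. cscale (g x) x) = 0" and x: "x \<in> f ` I"
    have "(\<Sum>q\<in>I. cscale (g (f q)) (f q)) = 0"
      using s by (simp add: sum.reindex[OF inj] o_def)
    from h[OF this] x show "g x = 0" by auto
  qed
qed

lemma CN_span: "CN N = cspan (ebas ` {1..N})"
  by (simp add: CN_Ecoord Ecoord_def)

lemma FD_basis:
  assumes "A \<subseteq> CN N"
  obtains B where "B \<subseteq> A" "\<not> cdependent B" "A \<subseteq> cspan B" "card B = cdim A" "finite B"
proof -
  obtain B where B: "B \<subseteq> A" "\<not> cdependent B" "A \<subseteq> cspan B" "card B = cdim A"
    by (rule cv.basis_exists)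
  have "finite B"
    using cv.independent_span_bound[of "ebas ` {1..N}" B] B assms by (auto simp: CN_span)
  with B that show ?thesis by auto
qed

lemma D3:
  assumes "csubspace A" "csubspace B" "A \<subseteq> B" "B \<subseteq> CN N" "cdim B \<le> cdim A"
  shows "A = B"
proof (rule ccontr)
  assume "A \<noteq> B"
  with assms(3) obtain v where v: "v \<in> B" "v \<notin> A" by auto
  obtain BA where BA: "BA \<subseteq> A" "\<not> cdependent BA" "A \<subseteq> cspan BA" "card BA = cdim A" "finite BA"
    using FD_basis[of A N] assms by auto
  obtain BB where BB: "BB \<subseteq> B" "\<not> cdependent BB" "B \<subseteq> cspan BB" "card BB = cdim B" "finite BB"
    using FD_basis[of B N] assms by auto
  have spA: "cspan BA = A" using BA assms(1) by (simp add: cv.span_subspace)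
  have ind: "\<not> cdependent (insert v BA)"
    using cv.independent_insertI[of v BA] BA v spA by auto
  have "insert v BA \<subseteq> cspan BB" using BA BB v assms(3) by auto
  then have "card (insert v BA) \<le> card BB"
    using cv.independent_span_bound[OF BB(5) ind] by auto
  moreover have "v \<notin> BA" using BA v by auto
  then have "card (insert v BA) = card BA + 1" using BA by simp
  ultimately show False using BA BB assms(5) by auto
qed

lemma dim_ins:
  assumes "csubspace A" "A \<subseteq> CN N" "v \<notin> A"
  shows "cdim (cspan (insert v A)) = cdim A + 1"
proof -
  obtain BA where BA: "BA \<subseteq> A" "\<not> cdependent BA" "A \<subseteq> cspan BA" "card BA = cdim A" "finite BA"
    using FD_basis[of A N] assms by auto
  have spA: "cspan BA = A" using BA assms(1) by (simp add: cv.span_subspace)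
  have ind: "\<not> cdependent (insert v BA)"
    using cv.independent_insertI[of v BA] BA assms spA by auto
  have "cspan (insert v BA) = cspan (insert v A)"
    by (metis spA cv.span_insert cv.span_span)
  then have 1: "cdim (cspan (insert v A)) = card (insert v BA)"
    using cv.dim_span_eq_card_independent[OF ind] by simp
  have "v \<notin> BA" using BA assms by auto
  then have "card (insert v BA) = cdim A + 1" using BA by simp
  with 1 show ?thesis by simp
qed

lemma spanning_indep:
  assumes "finite W" "card W \<le> k" "\<not> cdependent S" "S \<subseteq> cspan W" "card S = k" "finite S"
  shows "\<not> cdependent W \<and> card W = k"
proof -
  have cW: "card W = k" using cv.independent_span_bound[OF assms(1) assms(3) assms(4)] assms by auto
  moreover have "\<not> cdependent W"
  proof
    assume "cdependent W"
    then obtain a where a: "a \<in> W" "a \<in> cspan (W - {a})" by (auto simp: cv.dependent_def)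
    have "cspan W = cspan (W - {a})"
      using cv.span_redundant[OF a(2)] a(1) by (metis insert_Diff)
    then have "card S \<le> card (W - {a})"
      using cv.independent_span_bound[of "W - {a}" S] assms by auto
    moreover have "card (W - {a}) < card W" using a assms(1) by (meson card_Diff1_less)
    ultimately show False using cW assms by auto
  qed
  ultimately show ?thesis by auto
qed

lemma ebas_indep: "inj_on ebas I \<and> \<not> cdependent (ebas ` I)" if "finite I"
proof (rule indep_index[OF that])
  fix \<alpha> assume h: "(\<Sum>q\<in>I. cscale (\<alpha> q) (ebas q)) = 0"
  show "\<forall>q\<in>I. \<alpha> q = 0"
  proof
    fix q assume q: "q \<in> I"
    have "0 = (\<Sum>r\<in>I. cscale (\<alpha> r) (ebas r)) q" using h by simp
    also have "\<dots> = (\<Sum>r\<in>I. if r = q then \<alpha> q else 0)"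
      unfolding sum_cvec_apply by (rule sum.cong) (auto simp: ebas_def cscale_apply)
    also have "\<dots> = \<alpha> q" using q that by (simp add: sum.delta')
    finally show "\<alpha> q = 0" by simp
  qed
qed

lemma dim_Ecoord: "cdim (Ecoord m) = m"
proof -
  have "cdim (Ecoord m) = card (ebas ` {1..m})"
    unfolding Ecoord_def using ebas_indep[of "{1..m}"] cv.dim_span_eq_card_independent by auto
  also have "\<dots> = m" using ebas_indep[of "{1..m}"] by (simp add: card_image)
  finally show ?thesis .
qed

lemma Ecoord_mono: "m \<le> m' \<Longrightarrow> Ecoord m \<subseteq> Ecoord m'"
  by (auto simp: Ecoord_iff)

lemma Ecoord_0: "Ecoord 0 = {0}"
  by (auto simp: Ecoord_iff fun_eq_iff)

lemma dim_zero: "cdim {0} = 0"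
  using cv.dim_eq_card[of "{}" "{0}"] cv.independent_empty cv.span_insert_0[of "{}"] by simp

definition jump :: "cvec set \<Rightarrow> nat \<Rightarrow> bool" where
  "jump W m \<longleftrightarrow> (\<exists>v\<in>W. v \<in> Ecoord m \<and> v m \<noteq> 0)"

lemma jump_dim:
  assumes W: "csubspace W" "W \<subseteq> CN N"
  shows "cdim (W \<inter> Ecoord m) = card {m' \<in> {1..m}. jump W m'}"
proof (induction m)
  case 0
  have "W \<inter> Ecoord 0 = {0}" using W cv.subspace_0 by (auto simp: Ecoord_0)
  then have "cdim (W \<inter> Ecoord 0) = 0" by (simp only: dim_zero)
  then show ?case by simp
next
  case (Suc m)
  let ?A = "W \<inter> Ecoord m"
  have sA: "csubspace ?A" using W by (simp add: cv.subspace_inter subspace_Ecoord)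
  have sA': "csubspace (W \<inter> Ecoord (Suc m))" using W by (simp add: cv.subspace_inter subspace_Ecoord)
  show ?case
  proof (cases "jump W (Suc m)")
    case True
    then obtain v where v: "v \<in> W" "v \<in> Ecoord (Suc m)" "v (Suc m) \<noteq> 0" by (auto simp: jump_def)
    have vA: "v \<notin> ?A" using v by (auto simp: Ecoord_iff intro!: exI[of _ "Suc m"])
    have eq: "cspan (insert v ?A) = W \<inter> Ecoord (Suc m)"
    proof
      show "cspan (insert v ?A) \<subseteq> W \<inter> Ecoord (Suc m)"
        using v Ecoord_mono[of m "Suc m"] by (intro cv.span_minimal sA') auto
    next
      show "W \<inter> Ecoord (Suc m) \<subseteq> cspan (insert v ?A)"
      proof
        fix u assume u: "u \<in> W \<inter> Ecoord (Suc m)"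
        let ?c = "u (Suc m) / v (Suc m)"
        have "u - cscale ?c v \<in> W" using u v W cv.subspace_diff cv.subspace_scale by blast
        moreover have "u - cscale ?c v \<in> Ecoord m" unfolding Ecoord_iff
        proof (intro allI impI)
          fix k assume k: "k \<notin> {1..m}"
          show "(u - cscale ?c v) k = 0"
          proof (cases "k = Suc m")
            case True then show ?thesis using v by (simp add: cscale_apply)
          next
            case False then have "k \<notin> {1..Suc m}" using k by auto
            then show ?thesis using u v by (simp add: Ecoord_iff cscale_apply)
          qed
        qed
        ultimately have "u - cscale ?c v \<in> cspan ?A" by (simp add: cv.span_base)
        then show "u \<in> cspan (insert v ?A)" using cv.span_breakdown_eq by blast
      qed
    qed
    have "cdim (W \<inter> Ecoord (Suc m)) = cdim ?A + 1"
      using dim_ins[OF sA _ vA] W eq by auto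
    moreover have "{m' \<in> {1..Suc m}. jump W m'} = insert (Suc m) {m' \<in> {1..m}. jump W m'}"
      using True by (auto simp: le_Suc_eq)
    ultimately show ?thesis using Suc by simp
  next
    case False
    have "W \<inter> Ecoord (Suc m) = ?A"
    proof
      show "W \<inter> Ecoord (Suc m) \<subseteq> ?A"
      proof
        fix u assume u: "u \<in> W \<inter> Ecoord (Suc m)"
        then have "u (Suc m) = 0" using False by (auto simp: jump_def)
        with u show "u \<in> ?A" by (auto simp: Ecoord_iff le_Suc_eq)
      qed
    qed (use Ecoord_mono[of m "Suc m"] in auto)
    moreover have "{m' \<in> {1..Suc m}. jump W m'} = {m' \<in> {1..m}. jump W m'}"
      using False by (auto simp: le_Suc_eq)
    ultimately show ?thesis using Suc by simp
  qed
qed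

lemma istop_flag: "istopology (\<lambda>U. U \<subseteq> Fl n N \<and>
      openin (top_of_set (frames n N)) {f \<in> frames n N. flag_of n f \<in> U})"
  unfolding istopology_def
proof (rule conjI; intro allI impI)
  fix S T assume S: "S \<subseteq> Fl n N \<and> openin (top_of_set (frames n N)) {f \<in> frames n N. flag_of n f \<in> S}"
    and T: "T \<subseteq> Fl n N \<and> openin (top_of_set (frames n N)) {f \<in> frames n N. flag_of n f \<in> T}"
  have "{f \<in> frames n N. flag_of n f \<in> S \<inter> T} = {f \<in> frames n N. flag_of n f \<in> S} \<inter> {f \<in> frames n N. flag_of n f \<in> T}"
    by auto
  then show "S \<inter> T \<subseteq> Fl n N \<and> openin (top_of_set (frames n N)) {f \<in> frames n N. flag_of n f \<in> S \<inter> T}"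
    using S T by auto
next
  fix K assume K: "\<forall>S\<in>K. S \<subseteq> Fl n N \<and> openin (top_of_set (frames n N)) {f \<in> frames n N. flag_of n f \<in> S}"
  have "{f \<in> frames n N. flag_of n f \<in> \<Union>K} = (\<Union>S\<in>K. {f \<in> frames n N. flag_of n f \<in> S})"
    by auto
  then show "\<Union>K \<subseteq> Fl n N \<and> openin (top_of_set (frames n N)) {f \<in> frames n N. flag_of n f \<in> \<Union>K}"
    using K by auto
qed

lemma openin_flag_top: "openin (flag_top n N) U \<longleftrightarrow> U \<subseteq> Fl n N \<and>
      openin (top_of_set (frames n N)) {f \<in> frames n N. flag_of n f \<in> U}"
  unfolding flag_top_def using istop_flag by (simp add: topology_inverse')

lemma subspace_CN: "csubspace (CN N)"
  by (simp add: CN_Ecoord subspace_Ecoord)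

lemma span_CN: "S \<subseteq> CN N \<Longrightarrow> cspan S \<subseteq> CN N"
  using cv.span_minimal subspace_CN by blast

lemma frames_Fl:
  assumes f: "f \<in> frames n N"
  shows "flag_of n f \<in> Fl n N"
proof -
  have f1: "inj_on f {1..n}" "\<not> cdependent (f ` {1..n})" "\<And>l. l \<in> {1..n} \<Longrightarrow> f l \<in> CN N"
    using f by (auto simp: frames_def)
  have dimj: "cdim (cspan (f ` {1..j})) = j" if "j \<le> n" for j
  proof -
    have "\<not> cdependent (f ` {1..j})"
      by (rule cv.independent_mono[OF f1(2)]) (use that in auto)
    then have "cdim (cspan (f ` {1..j})) = card (f ` {1..j})"
      by (rule cv.dim_span_eq_card_independent)
    also have "\<dots> = j" using inj_on_subset[OF f1(1), of "{1..j}"] that by (simp add: card_image)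
    finally show ?thesis .
  qed
  show ?thesis unfolding Fl_def flag_of_def
  proof (intro CollectI conjI allI impI ballI)
    fix j show "cspan (f ` {1..min j n}) = cspan (f ` {1..min (min j n) n})" by simp
  next
    fix j assume "j \<le> n"
    then show "csubspace (cspan (f ` {1..min j n}))" "cdim (cspan (f ` {1..min j n})) = j"
      using dimj by (auto simp: cv.subspace_span)
    show "cspan (f ` {1..min j n}) \<subseteq> CN N"
      using f1(3) \<open>j \<le> n\<close> by (intro span_CN) auto
  next
    fix j assume "j \<in> {1..n}"
    then show "cspan (f ` {1..min (j - 1) n}) \<subseteq> cspan (f ` {1..min j n})"
      by (intro cv.span_mono) auto
  qed
qed

lemma Fl_mono:
  assumes V: "V \<in> Fl n N" and "j \<le> j'"
  shows "V j \<subseteq> V j'"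
proof -
  have ch: "\<forall>j\<in>{1..n}. V (j - 1) \<subseteq> V j" using V unfolding Fl_def by blast
  have mn: "\<And>j. V j = V (min j n)" using V unfolding Fl_def by blast
  have stp: "V (Suc k) \<supseteq> V k" for k
  proof (cases "Suc k \<le> n")
    case True then show ?thesis using ch[rule_format, of "Suc k"] by simp
  next
    case False
    then have "min k n = n" "min (Suc k) n = n" by auto
    then show ?thesis using mn[of k] mn[of "Suc k"] by simp
  qed
  show ?thesis using \<open>j \<le> j'\<close>
  proof (induction j' rule: dec_induct)
    case (step k) then show ?case using stp[of k] by auto
  qed auto
qed

lemma Fl_props:
  assumes "V \<in> Fl n N" "j \<le> n"
  shows "csubspace (V j)" "V j \<subseteq> CN N" "cdim (V j) = j"
  using assms unfolding Fl_def by auto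

lemma cell_from_jumps:
  assumes V: "V \<in> Fl n N"
    and T: "inj_on T {1..n}" "T ` {1..n} \<subseteq> {1..N}"
    and J: "\<And>j m. j \<le> n \<Longrightarrow> jump (V j) m \<Longrightarrow> m \<in> T ` {1..j}"
  shows "V \<in> schubert_cell n N T"
  unfolding schubert_cell_def
proof (intro CollectI conjI V allI impI)
  fix j m assume j: "j \<le> n" and m: "m \<le> N"
  have sV: "csubspace (V j)" "V j \<subseteq> CN N" "cdim (V j) = j" using Fl_props[OF V j] by auto
  let ?J = "{m' \<in> {1..N}. jump (V j) m'}"
  have "card ?J = cdim (V j \<inter> Ecoord N)" using jump_dim[OF sV(1,2)] by simp
  also have "V j \<inter> Ecoord N = V j" using sV(2) by (auto simp: CN_Ecoord)
  finally have cJ: "card ?J = j" using sV(3) by simp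
  have injj: "inj_on T {1..j}" using inj_on_subset[OF T(1)] j by auto
  have sub: "?J \<subseteq> T ` {1..j}" using J[OF j] by auto
  have cT: "card (T ` {1..j}) = j" using injj by (simp add: card_image)
  have eqJ: "?J = T ` {1..j}"
    by (rule card_subset_eq) (use sub cJ cT in auto)
  have "{m' \<in> {1..m}. jump (V j) m'} = T ` {l \<in> {1..j}. T l \<le> m}"
  proof
    show "{m' \<in> {1..m}. jump (V j) m'} \<subseteq> T ` {l \<in> {1..j}. T l \<le> m}"
    proof
      fix m' assume "m' \<in> {m' \<in> {1..m}. jump (V j) m'}"
      then have "m' \<in> ?J" "m' \<le> m" using m by auto
      from \<open>m' \<in> ?J\<close> have "m' \<in> T ` {1..j}" unfolding eqJ .
      then obtain l where "l \<in> {1..j}" "m' = T l" by blast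
      with \<open>m' \<le> m\<close> show "m' \<in> T ` {l \<in> {1..j}. T l \<le> m}" by auto
    qed
  next
    show "T ` {l \<in> {1..j}. T l \<le> m} \<subseteq> {m' \<in> {1..m}. jump (V j) m'}"
    proof
      fix m' assume "m' \<in> T ` {l \<in> {1..j}. T l \<le> m}"
      then obtain l where l: "l \<in> {1..j}" "T l \<le> m" "m' = T l" by auto
      then have "m' \<in> ?J" unfolding eqJ by blast
      moreover have "T l \<ge> 1" using T(2) l j by force
      ultimately show "m' \<in> {m' \<in> {1..m}. jump (V j) m'}" using l by auto
    qed
  qed
  moreover have "inj_on T {l \<in> {1..j}. T l \<le> m}"
    by (rule inj_on_subset[OF injj]) auto
  ultimately have "card {m' \<in> {1..m}. jump (V j) m'} = card {l \<in> {1..j}. T l \<le> m}"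
    by (simp add: card_image)
  then show "cdim (V j \<inter> Ecoord m) = card {l \<in> {1..j}. T l \<le> m}"
    using jump_dim[OF sV(1,2)] by simp
qed

definition f0 :: "nat \<Rightarrow> (nat \<Rightarrow> nat) \<Rightarrow> nat \<Rightarrow> cvec" where
  "f0 n w = (\<lambda>l. if l \<in> {1..n} then ebas (w l) else 0)"

lemma f0_frames:
  assumes "inj_on w {1..n}" "w ` {1..n} \<subseteq> {1..N}"
  shows "f0 n w \<in> frames n N"
proof -
  have im: "f0 n w ` {1..n} = ebas ` (w ` {1..n})" by (force simp: f0_def)
  have "inj_on ebas (w ` {1..n})" "\<not> cdependent (ebas ` (w ` {1..n}))" using ebas_indep by auto
  moreover have "inj_on (f0 n w) {1..n}"
  proof (rule inj_onI)
    fix x y assume "x \<in> {1..n}" "y \<in> {1..n}" "f0 n w x = f0 n w y"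
    then have "ebas (w x) = ebas (w y)" by (simp add: f0_def)
    then have "w x = w y" by (auto simp: ebas_def fun_eq_iff split: if_splits)
    then show "x = y" using assms(1) \<open>x \<in> {1..n}\<close> \<open>y \<in> {1..n}\<close> by (auto dest: inj_onD)
  qed
  moreover have "f0 n w l \<in> CN N" if "l \<in> {1..n}" for l
  proof -
    have "w l \<in> {1..N}" using assms(2) that by (simp add: image_subset_iff)
    then show ?thesis using that by (auto simp: f0_def CN_def ebas_def)
  qed
  ultimately show ?thesis unfolding frames_def using im by (auto simp: f0_def)
qed

lemma flag_f0: "flag_of n (f0 n w) = perm_flag n w"
proof
  fix j
  have "f0 n w ` {1..min j n} = (ebas \<circ> w) ` {1..min j n}" by (force simp: f0_def)
  then show "flag_of n (f0 n w) j = perm_flag n w j" by (simp add: flag_of_def perm_flag_def)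
qed

lemma xmap_add: "xmap n (u + v) = xmap n u + xmap n v"
  by (auto simp: xmap_def fun_eq_iff)

lemma xmap_scale: "xmap n (cscale c v) = cscale c (xmap n v)"
  by (auto simp: xmap_def fun_eq_iff cscale_apply)

lemma xmap_span:
  assumes "csubspace T" "xmap n ` S \<subseteq> T"
  shows "xmap n ` cspan S \<subseteq> T"
proof
  fix y assume "y \<in> xmap n ` cspan S"
  then obtain v where v: "v \<in> cspan S" "y = xmap n v" by auto
  have "xmap n v \<in> T" using v(1)
  proof (induction rule: cv.span_induct_alt)
    case base then show ?case using assms(1) cv.subspace_0 by (simp add: xmap_def fun_eq_iff zero_fun_def)
  next
    case (step c x y)
    have "xmap n (cscale c x + y) = cscale c (xmap n x) + xmap n y" by (simp only: xmap_add xmap_scale)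
    moreover have "xmap n x \<in> T" using step assms by auto
    ultimately show ?case using step assms by (metis cv.subspace_add cv.subspace_scale)
  qed
  then show "y \<in> T" using v by simp
qed

lemma xmap_in_E: "xmap n v \<in> Ecoord (n - 1)"
  by (auto simp: xmap_def Ecoord_iff)

lemma xmap_kill: "v \<in> Ecoord (n - 1) \<Longrightarrow> xmap n v = 0"
  by (auto simp: xmap_def Ecoord_iff fun_eq_iff)

lemma E_sub_xmap:
  assumes "2 * n - 2 \<le> N"
  shows "Ecoord (n - 1) \<subseteq> xmap n ` CN N"
proof
  fix v assume v: "v \<in> Ecoord (n - 1)"
  have v0: "\<And>k. k \<notin> {1..n - 1} \<Longrightarrow> v k = 0" using v by (simp add: Ecoord_iff)
  let ?u = "\<lambda>m. if n \<le> m \<and> m \<le> 2 * n - 2 then v (m - (n - 1)) else 0"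
  have "?u \<in> CN N" using assms v0 by (auto simp: CN_def)
  moreover have "xmap n ?u = v"
  proof
    fix k show "xmap n ?u k = v k"
      using v0[of k] by (cases "1 \<le> k \<and> k \<le> n - 1") (auto simp: xmap_def)
  qed
  ultimately show "v \<in> xmap n ` CN N" by force
qed

lemma xmap_diff: "xmap n (u - v) = xmap n u - xmap n v"
  by (auto simp: xmap_def fun_eq_iff)

lemma CN_to_E:
  assumes "v \<in> CN N" "v N = 0" shows "v \<in> Ecoord (N - 1)"
  unfolding Ecoord_iff
proof (intro allI impI)
  fix k assume k: "k \<notin> {1..N - 1}"
  show "v k = 0"
  proof (cases "k = N")
    case True then show ?thesis using assms by simp
  next
    case False then have "k \<notin> {1..N}" using k by auto
    then show ?thesis using assms by (auto simp: CN_def)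
  qed
qed

lemma cell_Y_props:
  assumes n2: "n \<ge> 2" and s: "s \<ge> n - 1" and i: "1 \<le> i" "i \<le> n"
    and Vc: "V \<in> schubert_cell n (n + s - 1) (wi n s i)" and VY: "V \<in> DeltaY n s"
  shows "V (i - 1) \<subseteq> Ecoord (n - 1)" "xmap n ` V n \<subseteq> V (i - 1)"
proof -
  define N where "N = n + s - 1"
  have N: "N \<ge> 2 * n - 2" "N \<ge> n" using n2 s by (auto simp: N_def)
  have EE: "Ecoord (n - 1) \<subseteq> Ecoord (N - 1)" using Ecoord_mono N(2) by auto
  have VF: "V \<in> Fl n N" using VY by (simp add: DeltaY_def N_def)
  have Y1: "xmap n ` CN N \<subseteq> V n" and Y2: "\<And>j. j \<le> n \<Longrightarrow> xmap n ` V j \<subseteq> V j"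
    using VY by (auto simp: DeltaY_def N_def)
  have cell: "\<And>j m. j \<le> n \<Longrightarrow> m \<le> N \<Longrightarrow> cdim (V j \<inter> Ecoord m) = card {l \<in> {1..j}. wi n s i l \<le> m}"
    using Vc by (auto simp: schubert_cell_def N_def)
  have P: "\<And>j. j \<le> n \<Longrightarrow> csubspace (V j) \<and> V j \<subseteq> CN N \<and> cdim (V j) = j"
    using Fl_props[OF VF] by auto
  have s1: "{l \<in> {1..i - 1}. wi n s i l \<le> n - 1} = {1..i - 1}" by (auto simp: wi_def)
  have s2: "{l \<in> {1..n}. wi n s i l \<le> N - 1} = {1..n} - {i}" using i N by (auto simp: wi_def N_def)
  have s3: "{l \<in> {1..i}. wi n s i l \<le> N - 1} = {1..i - 1}" using i N by (auto simp: wi_def N_def)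
  have sub1: "V (i - 1) \<inter> Ecoord (n - 1) = V (i - 1)"
  proof (rule D3[where N=N])
    show "csubspace (V (i - 1) \<inter> Ecoord (n - 1))" using P[of "i - 1"] i
      by (simp add: cv.subspace_inter subspace_Ecoord)
    show "cdim (V (i - 1)) \<le> cdim (V (i - 1) \<inter> Ecoord (n - 1))"
      using cell[of "i - 1" "n - 1"] P[of "i - 1"] i N s1 by simp
  qed (use P[of "i - 1"] i in auto)
  then show A: "V (i - 1) \<subseteq> Ecoord (n - 1)" by blast
  have EW: "Ecoord (n - 1) = V n \<inter> Ecoord (N - 1)"
  proof (rule D3[where N=N])
    show "Ecoord (n - 1) \<subseteq> V n \<inter> Ecoord (N - 1)"
      using E_sub_xmap[OF N(1)] Y1 EE by auto
    show "csubspace (V n \<inter> Ecoord (N - 1))" using P[of n]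
      by (simp add: cv.subspace_inter subspace_Ecoord)
    show "cdim (V n \<inter> Ecoord (N - 1)) \<le> cdim (Ecoord (n - 1))"
      using cell[of n "N - 1"] s2 i by (simp add: dim_Ecoord)
  qed (use P[of n] subspace_Ecoord in auto)
  have Vi: "V (i - 1) = V i \<inter> Ecoord (N - 1)"
  proof (rule D3[where N=N])
    show "V (i - 1) \<subseteq> V i \<inter> Ecoord (N - 1)"
      using A Fl_mono[OF VF, of "i - 1" i] EE by auto
    show "csubspace (V i \<inter> Ecoord (N - 1))" using P[of i] i
      by (simp add: cv.subspace_inter subspace_Ecoord)
    show "cdim (V i \<inter> Ecoord (N - 1)) \<le> cdim (V (i - 1))"
      using cell[of i "N - 1"] s3 i P[of "i - 1"] by simp
  qed (use P[of "i - 1"] P[of i] i in auto)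
  have "V i \<noteq> V (i - 1)" using P[of i] P[of "i - 1"] i by auto
  then obtain v where v: "v \<in> V i" "v \<notin> V (i - 1)" using Fl_mono[OF VF, of "i - 1" i] by auto
  have vCN: "v \<in> CN N" using v P[of i] i by auto
  have vN: "v N \<noteq> 0"
  proof
    assume "v N = 0"
    then have "v \<in> Ecoord (N - 1)" using vCN by (rule CN_to_E[rotated])
    then show False using v Vi by auto
  qed
  show "xmap n ` V n \<subseteq> V (i - 1)"
  proof
    fix y assume "y \<in> xmap n ` V n"
    then obtain u where u: "u \<in> V n" "y = xmap n u" by auto
    let ?c = "u N / v N"
    have vn: "v \<in> V n" using v Fl_mono[OF VF, of i n] i by auto
    have "u - cscale ?c v \<in> V n" using u vn P[of n] cv.subspace_diff cv.subspace_scale by blast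
    moreover have "u - cscale ?c v \<in> CN N"
      using u vn P[of n] subspace_CN cv.subspace_diff cv.subspace_scale by blast
    then have "u - cscale ?c v \<in> Ecoord (N - 1)"
      using vN by (intro CN_to_E) (auto simp: cscale_apply)
    ultimately have "u - cscale ?c v \<in> Ecoord (n - 1)" using EW by auto
    then have "xmap n u = cscale ?c (xmap n v)"
      using xmap_kill[of "u - cscale ?c v" n] by (simp add: xmap_diff xmap_scale)
    moreover have "xmap n v \<in> V i" using Y2[of i] v i by auto
    moreover have "xmap n v \<in> Ecoord (N - 1)" using xmap_in_E[of n v] EE by auto
    ultimately have "xmap n u \<in> cspan (V (i - 1))"
      using Vi by (auto intro: cv.span_scale cv.span_base)
    moreover have "csubspace (V (i - 1))" using P[of "i - 1"] i by simp
    ultimately show "y \<in> V (i - 1)" using u by (metis cv.span_eq_iff)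
  qed
qed

lemma perm_Y_basic:
  assumes n2: "n \<ge> 2" and s: "s \<ge> n - 1" and inj: "inj_on w {1..n}"
    and rng: "w ` {1..n} \<subseteq> {1..n + s - 1}" and VY: "perm_flag n w \<in> DeltaY n s"
  shows "{1..n - 1} \<subseteq> w ` {1..n}"
proof
  fix k assume k: "k \<in> {1..n - 1}"
  have "ebas k \<in> Ecoord (n - 1)" using k by (auto simp: Ecoord_iff ebas_def)
  also have "\<dots> \<subseteq> xmap n ` CN (n + s - 1)" using E_sub_xmap[of n "n + s - 1"] n2 s by auto
  also have "\<dots> \<subseteq> perm_flag n w n" using VY by (auto simp: DeltaY_def)
  also have "\<dots> = cspan (ebas ` (w ` {1..n}))" by (simp add: perm_flag_def image_comp)
  finally have "ebas k \<in> cspan (ebas ` (w ` {1..n}))" .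
  then show "k \<in> w ` {1..n}" using span_ebas_coord[of "ebas k" "w ` {1..n}" k]
    by (auto simp: ebas_def)
qed

lemma perm_Y_b:
  assumes n2: "n \<ge> 2" and s: "s \<ge> n - 1" and inj: "inj_on w {1..n}"
    and rng: "w ` {1..n} \<subseteq> {1..n + s - 1}" and VY: "perm_flag n w \<in> DeltaY n s"
  shows "\<exists>!b. b \<in> {1..n} \<and> w b \<ge> n"
    and "\<And>b. b \<in> {1..n} \<Longrightarrow> w b \<ge> n \<Longrightarrow> w ` ({1..n} - {b}) = {1..n - 1}"
proof -
  have sub: "{1..n - 1} \<subseteq> w ` {1..n}" by (rule perm_Y_basic[OF assms])
  have cw: "card (w ` {1..n}) = n" using inj by (simp add: card_image)
  have ex: "\<exists>b. b \<in> {1..n} \<and> w b \<ge> n"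
  proof (rule ccontr)
    assume "\<not> ?thesis"
    then have "w ` {1..n} \<subseteq> {1..n - 1}" using rng by force
    then have "card (w ` {1..n}) \<le> n - 1" by (metis card_atLeastAtMost card_mono finite_atLeastAtMost diff_Suc_1)
    then show False using cw n2 by simp
  qed
  have uniq: "b = b'" if b: "b \<in> {1..n}" "w b \<ge> n" and b': "b' \<in> {1..n}" "w b' \<ge> n" for b b'
  proof (rule ccontr)
    assume ne: "b \<noteq> b'"
    have "{1..n - 1} \<subseteq> w ` ({1..n} - {b, b'})"
    proof
      fix k assume k: "k \<in> {1..n - 1}"
      then obtain l where l: "l \<in> {1..n}" "k = w l" using sub by auto
      then have "l \<noteq> b" "l \<noteq> b'" using k b b' by auto
      then show "k \<in> w ` ({1..n} - {b, b'})" using l by auto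
    qed
    then have "n - 1 \<le> card (w ` ({1..n} - {b, b'}))"
      by (metis card_atLeastAtMost card_mono finite_Diff finite_atLeastAtMost finite_imageI diff_Suc_1)
    also have "\<dots> \<le> card ({1..n} - {b, b'})" by (rule card_image_le) auto
    also have "\<dots> = n - 2" using b b' ne by (simp add: card_Diff_subset)
    finally show False using n2 by simp
  qed
  show "\<exists>!b. b \<in> {1..n} \<and> w b \<ge> n" using ex uniq by blast
  fix b assume b: "b \<in> {1..n}" "w b \<ge> n"
  show "w ` ({1..n} - {b}) = {1..n - 1}"
  proof
    show "w ` ({1..n} - {b}) \<subseteq> {1..n - 1}"
    proof
      fix k assume "k \<in> w ` ({1..n} - {b})"
      then obtain l where l: "l \<in> {1..n} - {b}" "k = w l" by blast
      then have l: "l \<in> {1..n}" "l \<noteq> b" "k = w l" by auto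
      have "w l \<in> {1..n + s - 1}" using rng l(1) by (simp add: image_subset_iff)
      moreover have "\<not> w l \<ge> n" using uniq[OF b, of l] l by auto
      ultimately show "k \<in> {1..n - 1}" using l by auto
    qed
  next
    show "{1..n - 1} \<subseteq> w ` ({1..n} - {b})"
    proof
      fix k assume k: "k \<in> {1..n - 1}"
      then obtain l where l: "l \<in> {1..n}" "k = w l" using sub by auto
      then have "l \<noteq> b" using k b by auto
      then have "l \<in> {1..n} - {b}" using l by auto
      then show "k \<in> w ` ({1..n} - {b})" using l by blast
    qed
  qed
qed

lemma perm_Y_a:
  assumes n2: "n \<ge> 2" and s: "s \<ge> n - 1" and inj: "inj_on w {1..n}"
    and rng: "w ` {1..n} \<subseteq> {1..n + s - 1}" and VY: "perm_flag n w \<in> DeltaY n s"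
    and b: "b \<in> {1..n}" "w b \<ge> n" "w b \<le> 2 * n - 2"
  shows "\<exists>a\<in>{1..n}. w a = w b - (n - 1)"
    and "\<And>a. a \<in> {1..n} \<Longrightarrow> w a = w b - (n - 1) \<Longrightarrow> a < b"
proof -
  have sub: "{1..n - 1} \<subseteq> w ` {1..n}" by (rule perm_Y_basic[OF assms(1-5)])
  have r: "w b - (n - 1) \<in> {1..n - 1}" using b n2 by auto
  then show "\<exists>a\<in>{1..n}. w a = w b - (n - 1)" using sub by force
  fix a assume a: "a \<in> {1..n}" "w a = w b - (n - 1)"
  have "ebas (w b) \<in> perm_flag n w b"
    using b by (auto simp: perm_flag_def intro!: cv.span_base)
  moreover have "xmap n ` perm_flag n w b \<subseteq> perm_flag n w b" using VY b by (auto simp: DeltaY_def)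
  ultimately have "xmap n (ebas (w b)) \<in> perm_flag n w b" by blast
  moreover have "xmap n (ebas (w b)) = ebas (w b - (n - 1))"
  proof
    fix k show "xmap n (ebas (w b)) k = ebas (w b - (n - 1)) k"
      using r b by (auto simp: xmap_def ebas_def)
  qed
  ultimately have "ebas (w a) \<in> cspan (ebas ` (w ` {1..b}))"
    using a b by (simp add: perm_flag_def image_comp)
  then have "w a \<in> w ` {1..b}" using span_ebas_coord[of "ebas (w a)" "w ` {1..b}" "w a"]
    by (auto simp: ebas_def)
  then obtain a' where a': "a' \<in> {1..b}" "w a' = w a" by auto
  have "a' \<in> {1..n}" using a' b by auto
  then have "a' = a" using inj_onD[OF inj a'(2)] a by auto
  moreover have "a \<noteq> b" using a b r by auto
  ultimately show "a < b" using a' by auto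
qed

lemma cont_eval: "continuous_on UNIV (\<lambda>g::nat \<Rightarrow> cvec. g l k)"
  by (rule continuous_on_product_then_coordinatewise[OF continuous_on_product_coordinates])

lemma open_eval: "open S \<Longrightarrow> open {g::nat \<Rightarrow> cvec. g l k \<in> S}"
  using open_vimage[OF _ cont_eval, of S l k] by (simp add: vimage_def)

definition tri_map :: "nat \<Rightarrow> (nat \<Rightarrow> nat \<Rightarrow> complex) \<Rightarrow> (nat \<Rightarrow> cvec) \<Rightarrow> (nat \<Rightarrow> cvec)" where
  "tri_map n B h = (\<lambda>l. if l \<in> {1..n} then (\<Sum>p\<in>{1..l}. cscale (B p l) (h p)) else 0)"

lemma tri_cont: "continuous_on UNIV (tri_map n B)"
proof (intro continuous_on_coordinatewise_then_product)
  fix l k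
  show "continuous_on UNIV (\<lambda>h. tri_map n B h l k)"
  proof (cases "l \<in> {1..n}")
    case True
    have eq: "(\<lambda>h. tri_map n B h l k) = (\<lambda>h. \<Sum>p\<in>{1..l}. B p l * h p k)"
      using True by (simp add: tri_map_def sum_cvec_apply cscale_apply)
    show ?thesis unfolding eq
      by (intro continuous_on_sum continuous_on_mult continuous_on_const cont_eval)
  next
    case False
    have z: "tri_map n B h l k = 0" for h
      unfolding tri_map_def if_not_P[OF False] by simp
    show ?thesis by (simp add: z)
  qed
qed

lemma cscale_zero: "cscale 0 v = 0"
  by (simp add: fun_eq_iff cscale_apply)

lemma sum_split_last:
  fixes l :: nat
  assumes "l \<ge> 1"
  shows "(\<Sum>p\<in>{1..l}. F p) = F l + (\<Sum>p\<in>{1..l - 1}. (F p :: 'a::comm_monoid_add))"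
proof -
  obtain m where m: "l = Suc m" using assms by (cases l) auto
  have "{1..l} = insert l {1..l - 1}" unfolding m by (simp add: atLeastAtMostSuc_conv)
  moreover have "l \<notin> {1..l - 1}" using assms by auto
  ultimately show ?thesis by simp
qed

lemma tri_span:
  assumes h: "h \<in> frames n N" and B: "\<And>l. l \<in> {1..n} \<Longrightarrow> B l l \<noteq> 0"
  shows "j \<le> n \<Longrightarrow> cspan (tri_map n B h ` {1..j}) = cspan (h ` {1..j})"
proof (induction j)
  case 0 then show ?case by simp
next
  case (Suc j)
  let ?P = "tri_map n B h"
  have IH: "cspan (?P ` {1..j}) = cspan (h ` {1..j})" using Suc by simp
  have Pj: "?P (Suc j) = (\<Sum>p\<in>{1..Suc j}. cscale (B p (Suc j)) (h p))"
    using Suc by (simp add: tri_map_def)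
  let ?R = "(\<Sum>p\<in>{1..j}. cscale (B p (Suc j)) (h p))"
  have Rin: "?R \<in> cspan (h ` {1..j})" by (rule span_index_sum)
  have Psplit: "?P (Suc j) = cscale (B (Suc j) (Suc j)) (h (Suc j)) + ?R"
    using Pj sum_split_last[of "Suc j" "\<lambda>p. cscale (B p (Suc j)) (h p)"] by simp
  have Bn: "B (Suc j) (Suc j) \<noteq> 0" using B Suc by auto
  show ?case
  proof (rule antisym)
    have "?P ` {1..Suc j} \<subseteq> cspan (h ` {1..Suc j})"
    proof
      fix x assume "x \<in> ?P ` {1..Suc j}"
      then obtain p where p: "p \<in> {1..Suc j}" "x = ?P p" by auto
      show "x \<in> cspan (h ` {1..Suc j})"
      proof (cases "p = Suc j")
        case True
        have "?P (Suc j) \<in> cspan (h ` {1..Suc j})" unfolding Pj by (rule span_index_sum)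
        then show ?thesis using True p by simp
      next
        case False
        then have "x \<in> cspan (?P ` {1..j})" using p by (auto intro: cv.span_base)
        then have "x \<in> cspan (h ` {1..j})" using IH by simp
        moreover have "cspan (h ` {1..j}) \<subseteq> cspan (h ` {1..Suc j})" by (rule cv.span_mono) auto
        ultimately show ?thesis by auto
      qed
    qed
    then show "cspan (?P ` {1..Suc j}) \<subseteq> cspan (h ` {1..Suc j})"
      using cv.span_minimal cv.subspace_span by blast
  next
    have "h ` {1..Suc j} \<subseteq> cspan (?P ` {1..Suc j})"
    proof
      fix x assume "x \<in> h ` {1..Suc j}"
      then obtain p where p: "p \<in> {1..Suc j}" "x = h p" by auto
      have sub: "cspan (?P ` {1..j}) \<subseteq> cspan (?P ` {1..Suc j})" by (rule cv.span_mono) auto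
      show "x \<in> cspan (?P ` {1..Suc j})"
      proof (cases "p = Suc j")
        case True
        have "h (Suc j) = cscale (1 / B (Suc j) (Suc j)) (?P (Suc j) - ?R)"
          using Psplit Bn by (simp add: fun_eq_iff cscale_apply)
        moreover have "?R \<in> cspan (?P ` {1..Suc j})" using Rin IH sub by auto
        moreover have "?P (Suc j) \<in> cspan (?P ` {1..Suc j})" by (rule cv.span_base) auto
        ultimately show ?thesis using True p by (simp add: cv.span_scale cv.span_diff)
      next
        case False
        then have "x \<in> cspan (h ` {1..j})" using p by (auto intro: cv.span_base)
        then show ?thesis using IH sub by auto
      qed
    qed
    then show "cspan (h ` {1..Suc j}) \<subseteq> cspan (?P ` {1..Suc j})"
      using cv.span_minimal cv.subspace_span by blast
  qed
qed

lemma tri_frames: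
  assumes h: "h \<in> frames n N" and B: "\<And>l. l \<in> {1..n} \<Longrightarrow> B l l \<noteq> 0"
  shows "tri_map n B h \<in> frames n N" "flag_of n (tri_map n B h) = flag_of n h"
proof -
  let ?P = "tri_map n B h"
  have hf: "inj_on h {1..n}" "\<not> cdependent (h ` {1..n})" "\<And>l. l \<in> {1..n} \<Longrightarrow> h l \<in> CN N"
    using h by (auto simp: frames_def)
  have sp: "cspan (?P ` {1..j}) = cspan (h ` {1..j})" if "j \<le> n" for j
    by (rule tri_span[where B=B, OF h B that])
  show "flag_of n ?P = flag_of n h"
    unfolding flag_of_def using sp by (auto simp: fun_eq_iff)
  have "\<not> cdependent (?P ` {1..n}) \<and> card (?P ` {1..n}) = n"
  proof (rule spanning_indep[of _ n "h ` {1..n}"])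
    show "card (?P ` {1..n}) \<le> n" using card_image_le[of "{1..n}" ?P] by simp
    show "card (h ` {1..n}) = n" using hf by (simp add: card_image)
    show "h ` {1..n} \<subseteq> cspan (?P ` {1..n})" using sp[of n] cv.span_superset by auto
  qed (use hf in auto)
  moreover have "?P l \<in> CN N" if "l \<in> {1..n}" for l
  proof -
    have "?P l \<in> cspan (?P ` {1..n})" using that by (auto intro: cv.span_base)
    also have "\<dots> = cspan (h ` {1..n})" using sp by simp
    also have "\<dots> \<subseteq> CN N" using hf by (intro span_CN) auto
    finally show ?thesis .
  qed
  ultimately show "?P \<in> frames n N"
    unfolding frames_def by (auto simp: tri_map_def intro: eq_card_imp_inj_on)
qed

lemma frames_B:
  assumes f: "f \<in> frames n N" and g: "g \<in> frames n N" and eq: "flag_of n f = flag_of n g"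
  shows "\<exists>B. (\<forall>l\<in>{1..n}. g l = (\<Sum>p\<in>{1..l}. cscale (B p l) (f p))) \<and> (\<forall>l\<in>{1..n}. B l l \<noteq> 0)"
proof -
  have spf: "cspan (f ` {1..j}) = cspan (g ` {1..j})" if "j \<le> n" for j
  proof -
    have "flag_of n f j = flag_of n g j" using eq by simp
    then show ?thesis using that by (simp add: flag_of_def min_absorb1)
  qed
  have "\<forall>l\<in>{1..n}. \<exists>\<alpha>. g l = (\<Sum>p\<in>{1..l}. cscale (\<alpha> p) (f p))"
  proof
    fix l assume l: "l \<in> {1..n}"
    have "g l \<in> cspan (g ` {1..l})" using l by (auto intro: cv.span_base)
    then have "g l \<in> cspan (f ` {1..l})" using spf[of l] l by simp
    then show "\<exists>\<alpha>. g l = (\<Sum>p\<in>{1..l}. cscale (\<alpha> p) (f p))" by (rule span_index[rotated]) simp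
  qed
  then obtain A where A: "\<forall>l\<in>{1..n}. g l = (\<Sum>p\<in>{1..l}. cscale (A l p) (f p))" by metis
  define B where "B = (\<lambda>p l. A l p)"
  have gB: "\<forall>l\<in>{1..n}. g l = (\<Sum>p\<in>{1..l}. cscale (B p l) (f p))" using A by (simp add: B_def)
  have "\<forall>l\<in>{1..n}. B l l \<noteq> 0"
  proof (intro ballI notI)
    fix l assume l: "l \<in> {1..n}" and z: "B l l = 0"
    have "g l = (\<Sum>p\<in>{1..l - 1}. cscale (B p l) (f p))"
      using gB l z sum_split_last[of l "\<lambda>p. cscale (B p l) (f p)"] by (simp add: cscale_zero)
    then have "g l \<in> cspan (f ` {1..l - 1})" by (simp add: span_index_sum)
    moreover have "l - 1 \<le> n" using l by auto
    ultimately have gin: "g l \<in> cspan (g ` {1..l - 1})" using spf by simp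
    have gf: "inj_on g {1..n}" "\<not> cdependent (g ` {1..n})" using g by (auto simp: frames_def)
    have "g ` {1..l - 1} \<subseteq> g ` {1..n} - {g l}"
    proof
      fix x assume "x \<in> g ` {1..l - 1}"
      then obtain p where p: "p \<in> {1..l - 1}" "x = g p" by auto
      then have "p \<in> {1..n}" "p \<noteq> l" using l by auto
      then have "g p \<noteq> g l" using inj_onD[OF gf(1)] l by metis
      then show "x \<in> g ` {1..n} - {g l}" using p \<open>p \<in> {1..n}\<close> by auto
    qed
    then have "g l \<in> cspan (g ` {1..n} - {g l})" using gin cv.span_mono by blast
    then have "cdependent (g ` {1..n})" using l by (auto simp: cv.dependent_def)
    then show False using gf by simp
  qed
  with gB show ?thesis by blast
qed

lemma saturation:
  assumes T: "open T"
  shows "openin (flag_top n N) (flag_of n ` (frames n N \<inter> T))"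
  unfolding openin_flag_top
proof
  show "flag_of n ` (frames n N \<inter> T) \<subseteq> Fl n N" using frames_Fl by auto
  let ?P = "{f \<in> frames n N. flag_of n f \<in> flag_of n ` (frames n N \<inter> T)}"
  show "openin (top_of_set (frames n N)) ?P"
    unfolding openin_subopen[of _ ?P]
  proof
    fix f assume "f \<in> ?P"
    then obtain g where f: "f \<in> frames n N" and g: "g \<in> frames n N" "g \<in> T" and eq: "flag_of n f = flag_of n g"
      by auto
    obtain B where B: "\<forall>l\<in>{1..n}. g l = (\<Sum>p\<in>{1..l}. cscale (B p l) (f p))" "\<forall>l\<in>{1..n}. B l l \<noteq> 0"
      using frames_B[OF f g(1) eq] by blast
    have Pf: "tri_map n B f = g"
    proof
      fix l show "tri_map n B f l = g l"
        using B g by (cases "l \<in> {1..n}") (auto simp: tri_map_def frames_def)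
    qed
    let ?T' = "frames n N \<inter> (tri_map n B -` T)"
    have "open (tri_map n B -` T)" by (rule open_vimage[OF T tri_cont])
    then have "openin (top_of_set (frames n N)) ?T'" by auto
    moreover have "f \<in> ?T'" using f Pf g by auto
    moreover have "?T' \<subseteq> ?P"
    proof
      fix h assume h: "h \<in> ?T'"
      then have hf: "h \<in> frames n N" by auto
      have "tri_map n B h \<in> frames n N \<inter> T" using tri_frames(1)[OF hf] B(2) h by auto
      moreover have "flag_of n h = flag_of n (tri_map n B h)" using tri_frames(2)[OF hf] B(2) by auto
      ultimately show "h \<in> ?P" using hf by auto
    qed
    ultimately show "\<exists>T. openin (top_of_set (frames n N)) T \<and> f \<in> T \<and> T \<subseteq> ?P" by blast
  qed
qed

lemma frames_topspace: "f \<in> frames n N \<Longrightarrow> flag_of n f \<in> topspace (flag_top n N)"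
proof -
  assume f: "f \<in> frames n N"
  have "openin (flag_top n N) (flag_of n ` (frames n N \<inter> UNIV))" by (rule saturation) simp
  then have "flag_of n ` frames n N \<subseteq> topspace (flag_top n N)" using openin_subset by fastforce
  then show ?thesis using f by auto
qed

lemma nonclosure_A:
  assumes n2: "n \<ge> 2" and s: "s \<ge> n - 1" and i: "1 \<le> i" "i \<le> n"
    and VF: "V \<in> Fl n (n + s - 1)" and nsub: "\<not> V (i - 1) \<subseteq> Ecoord (n - 1)"
  shows "V \<notin> Kcomp n s i"
proof
  assume VK: "V \<in> Kcomp n s i"
  define N where "N = n + s - 1"
  let ?U = "{V' \<in> Fl n N. \<not> V' (i - 1) \<subseteq> Ecoord (n - 1)}"
  let ?Q = "\<Union>l\<in>{1..i - 1}. \<Union>k\<in>- {1..n - 1}. {f::nat \<Rightarrow> cvec. f l k \<in> - {0}}"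
  have oQ: "open ?Q" by (intro open_UN ballI open_eval) auto
  have eqP: "{f \<in> frames n N. flag_of n f \<in> ?U} = frames n N \<inter> ?Q"
  proof (rule set_eqI, rule iffI)
    fix f assume "f \<in> {f \<in> frames n N. flag_of n f \<in> ?U}"
    then have f: "f \<in> frames n N" "\<not> cspan (f ` {1..i - 1}) \<subseteq> Ecoord (n - 1)"
      using i by (auto simp: flag_of_def min_absorb1)
    have "\<not> f ` {1..i - 1} \<subseteq> Ecoord (n - 1)"
      using f(2) cv.span_minimal subspace_Ecoord by blast
    then obtain x where x: "x \<in> f ` {1..i - 1}" "x \<notin> Ecoord (n - 1)" by (meson subsetI)
    then obtain l where l: "l \<in> {1..i - 1}" "f l \<notin> Ecoord (n - 1)" by (auto simp del: atLeastAtMost_iff)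
    then obtain k where "k \<notin> {1..n - 1}" "f l k \<noteq> 0" by (auto simp: Ecoord_iff)
    then show "f \<in> frames n N \<inter> ?Q" using f l by auto
  next
    fix f assume "f \<in> frames n N \<inter> ?Q"
    then obtain l k where f: "f \<in> frames n N" and l: "l \<in> {1..i - 1}" "k \<notin> {1..n - 1}" "f l k \<noteq> 0"
      by auto
    have "f l \<notin> Ecoord (n - 1)" using l by (auto simp: Ecoord_iff)
    moreover have "f l \<in> cspan (f ` {1..i - 1})" using l by (auto intro: cv.span_base)
    ultimately have "\<not> flag_of n f (i - 1) \<subseteq> Ecoord (n - 1)"
      using i by (auto simp: flag_of_def min_absorb1)
    then show "f \<in> {f \<in> frames n N. flag_of n f \<in> ?U}" using f frames_Fl by auto
  qed
  have oU: "openin (flag_top n N) ?U"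
    unfolding openin_flag_top
  proof
    show "?U \<subseteq> Fl n N" by blast
    show "openin (top_of_set (frames n N)) {f \<in> frames n N. flag_of n f \<in> ?U}"
      unfolding eqP by (rule openin_open_Int[OF oQ])
  qed
  let ?X = "subtopology (flag_top n N) (DeltaY n s)"
  have "V \<in> ?X closure_of (schubert_cell n N (wi n s i) \<inter> DeltaY n s)"
    using VK by (simp add: Kcomp_def N_def)
  then have cl: "\<And>T. V \<in> T \<Longrightarrow> openin ?X T \<Longrightarrow> \<exists>y. y \<in> schubert_cell n N (wi n s i) \<inter> DeltaY n s \<and> y \<in> T"
    and VY: "V \<in> DeltaY n s"
    by (auto simp: in_closure_of)
  have oT: "openin ?X (?U \<inter> DeltaY n s)" by (rule openin_subtopology_Int[OF oU])
  have VU: "V \<in> ?U" using VF nsub unfolding N_def by blast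
  obtain y where y: "y \<in> schubert_cell n N (wi n s i)" "y \<in> DeltaY n s" "y \<in> ?U"
    using cl[OF _ oT] VU VY by blast
  have "y (i - 1) \<subseteq> Ecoord (n - 1)" using cell_Y_props(1)[OF n2 s i] y unfolding N_def by blast
  then show False using y(3) by blast
qed

lemma closure_by_curve:
  fixes H :: "real \<Rightarrow> nat \<Rightarrow> cvec"
  assumes Hc: "continuous_on UNIV H" and H0: "H 0 \<in> frames n (n + s - 1)"
    and VY: "flag_of n (H 0) \<in> DeltaY n s"
    and good: "\<And>t. 0 < t \<Longrightarrow> t < 1 \<Longrightarrow> H t \<in> frames n (n + s - 1) \<and>
        flag_of n (H t) \<in> schubert_cell n (n + s - 1) (wi n s i) \<inter> DeltaY n s"
  shows "flag_of n (H 0) \<in> Kcomp n s i"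
proof -
  define N where "N = n + s - 1"
  let ?X = "subtopology (flag_top n N) (DeltaY n s)"
  let ?V = "flag_of n (H 0)"
  have "?V \<in> topspace ?X" using frames_topspace[OF H0] VY by (simp add: N_def)
  moreover have "\<exists>y. y \<in> schubert_cell n N (wi n s i) \<inter> DeltaY n s \<and> y \<in> T"
    if T: "?V \<in> T" "openin ?X T" for T
  proof -
    obtain U where U: "openin (flag_top n N) U" "T = U \<inter> DeltaY n s"
      using T(2) by (auto simp: openin_subtopology)
    have "openin (top_of_set (frames n N)) {f \<in> frames n N. flag_of n f \<in> U}"
      using U(1) by (simp add: openin_flag_top)
    then obtain T' where T': "open T'" "{f \<in> frames n N. flag_of n f \<in> U} = frames n N \<inter> T'"
      by (auto simp: openin_open)
    have "H 0 \<in> T'" using T' T U H0 by (auto simp: N_def)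
    moreover have "open (H -` T')" by (rule open_vimage[OF T'(1) Hc])
    ultimately obtain d where d: "d > 0" "ball 0 d \<subseteq> H -` T'"
      by (meson open_contains_ball vimageI2)
    define t where "t = min (d / 2) (1 / 2)"
    have t: "0 < t" "t < 1" "t \<in> ball 0 d" using d by (auto simp: t_def)
    then have "H t \<in> T'" using subsetD[OF d(2) t(3)] by simp
    moreover have Ht: "H t \<in> frames n N" "flag_of n (H t) \<in> schubert_cell n N (wi n s i) \<inter> DeltaY n s"
      using good[OF t(1,2)] by (auto simp: N_def)
    ultimately have "flag_of n (H t) \<in> U" using T' by auto
    then show ?thesis using Ht U by auto
  qed
  ultimately have "?V \<in> ?X closure_of (schubert_cell n N (wi n s i) \<inter> DeltaY n s)"
    by (auto simp: in_closure_of)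
  then show ?thesis by (simp add: Kcomp_def N_def)
qed

lemma sum_norm_bound:
  assumes "\<And>p. p \<in> A \<Longrightarrow> cmod (F p) \<le> K"
  shows "cmod (\<Sum>p\<in>A. F p) \<le> real (card A) * K"
proof -
  have "cmod (\<Sum>p\<in>A. F p) \<le> (\<Sum>p\<in>A. cmod (F p))" by (rule norm_sum)
  also have "\<dots> \<le> real (card A) * K" using assms sum_bounded_above[of A "\<lambda>p. cmod (F p)" K] by simp
  finally show ?thesis .
qed

lemma quant_contra:
  fixes g :: "nat \<Rightarrow> cvec" and \<alpha> :: "nat \<Rightarrow> complex" and \<epsilon> :: real and L :: cvec
  assumes eps: "\<epsilon> > 0" "real n * \<epsilon> \<le> 1/4" "\<epsilon> \<le> 1/8"
    and I: "finite I" "card I \<le> n"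
    and L: "\<And>k. L k = (\<Sum>p\<in>I. \<alpha> p * g p k)"
    and q1: "\<And>q. q \<in> I \<Longrightarrow> cmod (L (w q)) < \<epsilon>"
    and q2: "\<And>q. q \<in> I \<Longrightarrow> cmod (g q (w q)) > 1 - \<epsilon>"
    and q3: "\<And>p q. p \<in> I \<Longrightarrow> q \<in> I \<Longrightarrow> p \<noteq> q \<Longrightarrow> cmod (g p (w q)) < \<epsilon>"
    and k1: "cmod (L k0) > 1 - \<epsilon>"
    and k2: "\<And>p. p \<in> I \<Longrightarrow> cmod (g p k0) < \<epsilon>"
  shows False
proof -
  define M where "M = Max (insert 0 ((\<lambda>p. cmod (\<alpha> p)) ` I))"
  have fin: "finite (insert 0 ((\<lambda>p. cmod (\<alpha> p)) ` I))" using I by simp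
  have hM: "\<And>p. p \<in> I \<Longrightarrow> cmod (\<alpha> p) \<le> M" unfolding M_def using fin by (intro Max_ge) auto
  have M0: "M \<ge> 0" unfolding M_def using fin by (intro Max_ge) auto
  have Mb: "M < 2 * \<epsilon>"
  proof (cases "M = 0")
    case True then show ?thesis using eps by simp
  next
    case False
    have "M \<in> insert 0 ((\<lambda>p. cmod (\<alpha> p)) ` I)" unfolding M_def using fin by (intro Max_in) auto
    with False obtain q where q: "q \<in> I" "cmod (\<alpha> q) = M" by auto
    have split: "L (w q) = \<alpha> q * g q (w q) + (\<Sum>p\<in>I - {q}. \<alpha> p * g p (w q))"
      using L[of "w q"] q(1) I(1) by (simp add: sum.remove)
    have r: "cmod (\<Sum>p\<in>I - {q}. \<alpha> p * g p (w q)) \<le> real (card (I - {q})) * (M * \<epsilon>)"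
    proof (rule sum_norm_bound)
      fix p assume p: "p \<in> I - {q}"
      have "cmod (\<alpha> p * g p (w q)) = cmod (\<alpha> p) * cmod (g p (w q))" by (simp add: norm_mult)
      also have "\<dots> \<le> M * \<epsilon>" using hM[of p] q3[of p q] p q M0
        by (intro mult_mono) auto
      finally show "cmod (\<alpha> p * g p (w q)) \<le> M * \<epsilon>" .
    qed
    have "real (card (I - {q})) \<le> real n" using I card_Diff1_le[of I q] by linarith
    then have r2: "cmod (\<Sum>p\<in>I - {q}. \<alpha> p * g p (w q)) \<le> real n * (M * \<epsilon>)"
      using r M0 eps by (meson mult_nonneg_nonneg less_imp_le mult_right_mono order_trans)
    have "cmod (\<alpha> q * g q (w q)) = M * cmod (g q (w q))" using q by (simp add: norm_mult)
    also have "\<dots> \<ge> M * (1 - \<epsilon>)" using q2[OF q(1)] M0 by (intro mult_left_mono) auto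
    finally have h1: "cmod (\<alpha> q * g q (w q)) \<ge> M * (1 - \<epsilon>)" .
    have "cmod (L (w q)) \<ge> cmod (\<alpha> q * g q (w q)) - cmod (\<Sum>p\<in>I - {q}. \<alpha> p * g p (w q))"
      unfolding split by (rule norm_diff_ineq)
    then have "cmod (L (w q)) \<ge> M * (1 - \<epsilon>) - real n * (M * \<epsilon>)" using h1 r2 by linarith
    then have x1: "M * (1 - \<epsilon>) - real n * (M * \<epsilon>) < \<epsilon>" using q1[OF q(1)] by linarith
    have x1': "M - M * \<epsilon> - real n * (M * \<epsilon>) < \<epsilon>" using x1 by (simp add: algebra_simps)
    have x2: "real n * (M * \<epsilon>) \<le> M / 4" using eps M0
      by (metis mult.assoc mult.commute mult_left_mono divide_inverse mult.right_neutral times_divide_eq_right)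
    have x3: "M * \<epsilon> \<le> M * (1/8)" using eps M0 by (intro mult_left_mono) auto
    show ?thesis using x1' x2 x3 eps by linarith
  qed
  have "cmod (L k0) \<le> real (card I) * (M * \<epsilon>)"
    unfolding L
  proof (rule sum_norm_bound)
    fix p assume p: "p \<in> I"
    have "cmod (\<alpha> p * g p k0) = cmod (\<alpha> p) * cmod (g p k0)" by (simp add: norm_mult)
    also have "\<dots> \<le> M * \<epsilon>" using hM[OF p] k2[OF p] M0 by (intro mult_mono) auto
    finally show "cmod (\<alpha> p * g p k0) \<le> M * \<epsilon>" .
  qed
  also have "\<dots> \<le> real n * (M * \<epsilon>)" using I M0 eps by (intro mult_right_mono) auto
  also have "\<dots> \<le> real n * (2 * \<epsilon> * \<epsilon>)" using Mb eps by (intro mult_left_mono mult_right_mono) auto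
  also have "\<dots> = (real n * \<epsilon>) * (2 * \<epsilon>)" by (simp add: algebra_simps)
  also have "\<dots> \<le> 1/4 * (2 * \<epsilon>)" using eps by (intro mult_right_mono) auto
  finally have "cmod (L k0) \<le> \<epsilon> / 2" by simp
  then show False using k1 eps by linarith
qed

lemma nonclosure_B:
  assumes n2: "n \<ge> 2" and s: "s \<ge> n - 1" and inj: "inj_on w {1..n}"
    and rng: "w ` {1..n} \<subseteq> {1..n + s - 1}"
    and b: "b \<in> {1..n}" "w b \<ge> n" "w b \<le> 2 * n - 2"
    and a: "a \<in> {1..n}" "w a = w b - (n - 1)" "a < b"
    and oth: "\<And>l. l \<in> {1..n} \<Longrightarrow> l \<noteq> b \<Longrightarrow> w l \<le> n - 1"
    and i: "1 \<le> i" "i \<le> a"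
  shows "perm_flag n w \<notin> Kcomp n s i"
proof
  assume VK: "perm_flag n w \<in> Kcomp n s i"
  define N where "N = n + s - 1"
  have N: "N \<ge> 2 * n - 2" using n2 s by (auto simp: N_def)
  define \<epsilon> :: real where "\<epsilon> = 1 / (4 * real n)"
  have eps: "\<epsilon> > 0" "real n * \<epsilon> \<le> 1/4" "\<epsilon> \<le> 1/8" using n2 by (auto simp: \<epsilon>_def field_simps)
  define F where "F = f0 n w"
  have wr: "\<And>l. l \<in> {1..n} \<Longrightarrow> w l \<in> {1..N}" using rng by (auto simp: N_def image_subset_iff)
  have Ff: "F \<in> frames n N" unfolding F_def N_def by (rule f0_frames[OF inj rng])
  define Box where "Box = (\<Inter>lk\<in>{1..n} \<times> {1..N}. {g::nat \<Rightarrow> cvec. g (fst lk) (snd lk) \<in> ball (F (fst lk) (snd lk)) \<epsilon>})"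
  have oBox: "open Box" unfolding Box_def by (intro open_INT ballI open_eval open_ball) auto
  have inBox: "cmod (g l k - (if k = w l then 1 else 0)) < \<epsilon>"
    if "g \<in> Box" "l \<in> {1..n}" "k \<in> {1..N}" for g l k
  proof -
    have "g l k \<in> ball (F l k) \<epsilon>" using that unfolding Box_def by force
    then show ?thesis using that(2) by (simp add: F_def f0_def ebas_def dist_norm norm_minus_commute)
  qed
  let ?U = "flag_of n ` (frames n N \<inter> Box)"
  have oU: "openin (flag_top n N) ?U" by (rule saturation[OF oBox])
  have FB: "F \<in> Box" unfolding Box_def using eps by auto
  have VU: "perm_flag n w \<in> ?U"
  proof -
    have "perm_flag n w = flag_of n F" using flag_f0[of n w] by (simp add: F_def)
    then show ?thesis using Ff FB by blast
  qed
  let ?X = "subtopology (flag_top n N) (DeltaY n s)"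
  have "perm_flag n w \<in> ?X closure_of (schubert_cell n N (wi n s i) \<inter> DeltaY n s)"
    using VK by (simp add: Kcomp_def N_def)
  then have cl: "\<And>T. perm_flag n w \<in> T \<Longrightarrow> openin ?X T \<Longrightarrow> \<exists>y. y \<in> schubert_cell n N (wi n s i) \<inter> DeltaY n s \<and> y \<in> T"
    and VY: "perm_flag n w \<in> DeltaY n s"
    by (auto simp: in_closure_of)
  have oT: "openin ?X (?U \<inter> DeltaY n s)" by (rule openin_subtopology_Int[OF oU])
  obtain y where y: "y \<in> schubert_cell n N (wi n s i)" "y \<in> DeltaY n s" "y \<in> ?U"
    using cl[OF _ oT] VU VY by blast
  then obtain g where g: "g \<in> frames n N" "g \<in> Box" "y = flag_of n g" by blast
  have iN: "i \<le> n" using i a by auto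
  have "xmap n ` y n \<subseteq> y (i - 1)" using cell_Y_props(2)[OF n2 s i(1) iN] y unfolding N_def by blast
  moreover have "g b \<in> y n" using g b by (auto simp: flag_of_def intro: cv.span_base)
  ultimately have "xmap n (g b) \<in> y (i - 1)" by blast
  then have "xmap n (g b) \<in> cspan (g ` {1..i - 1})" using g iN by (simp add: flag_of_def min_absorb1)
  then obtain \<alpha> where \<alpha>: "xmap n (g b) = (\<Sum>p\<in>{1..i - 1}. cscale (\<alpha> p) (g p))"
    using span_index[of "{1..i - 1}" "xmap n (g b)" g] by auto
  let ?L = "xmap n (g b)"
  have Lk: "?L k = g b (k + (n - 1))" if "k \<in> {1..n - 1}" for k using that by (simp add: xmap_def)
  have Iq: "q \<in> {1..n}" "q \<noteq> b" "q \<noteq> a" "w q \<in> {1..n - 1}" if "q \<in> {1..i - 1}" for q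
  proof -
    show q: "q \<in> {1..n}" "q \<noteq> b" "q \<noteq> a" using that i a by auto
    show "w q \<in> {1..n - 1}" using oth[OF q(1,2)] wr[OF q(1)] by auto
  qed
  have wa: "w a \<in> {1..n - 1}" using a b n2 by auto
  show False
  proof (rule quant_contra[OF eps, of "{1..i - 1}" ?L \<alpha> g w "w a"])
    show "finite {1..i - 1}" "card {1..i - 1} \<le> n" using iN by auto
    show "\<And>k. ?L k = (\<Sum>p\<in>{1..i - 1}. \<alpha> p * g p k)"
      by (subst \<alpha>) (simp add: sum_cvec_apply cscale_apply)
  next
    fix q assume q: "q \<in> {1..i - 1}"
    note Q = Iq[OF q]
    have ne: "w q + (n - 1) \<noteq> w b"
    proof
      assume "w q + (n - 1) = w b"
      then have "w q = w a" using a by auto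
      then show False using Q inj_onD[OF inj _ Q(1) a(1)] by auto
    qed
    have kr: "w q + (n - 1) \<in> {1..N}" using Q N n2 by auto
    show "cmod (?L (w q)) < \<epsilon>" using Lk[OF Q(4)] inBox[OF g(2) b(1) kr] ne by simp
    have "cmod (g q (w q) - 1) < \<epsilon>" using inBox[OF g(2) Q(1) wr[OF Q(1)]] by simp
    then show "cmod (g q (w q)) > 1 - \<epsilon>" using norm_triangle_ineq2[of 1 "1 - g q (w q)"]
      by (simp add: norm_minus_commute)
    show "cmod (g q (w a)) < \<epsilon>"
    proof -
      have "w a \<noteq> w q" using inj_onD[OF inj _ Q(1) a(1)] Q by auto
      then show ?thesis using inBox[OF g(2) Q(1) wr[OF a(1)]] by simp
    qed
  next
    fix p q assume p: "p \<in> {1..i - 1}" and q: "q \<in> {1..i - 1}" and pq: "p \<noteq> q"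
    have "w q \<noteq> w p" using inj_onD[OF inj _ Iq(1)[OF q] Iq(1)[OF p]] pq by auto
    then show "cmod (g p (w q)) < \<epsilon>" using inBox[OF g(2) Iq(1)[OF p] wr[OF Iq(1)[OF q]]] by simp
  next
    have "?L (w a) = g b (w b)" using Lk[OF wa] a b by simp
    moreover have "cmod (g b (w b) - 1) < \<epsilon>" using inBox[OF g(2) b(1) wr[OF b(1)]] by simp
    ultimately show "cmod (?L (w a)) > 1 - \<epsilon>" using norm_triangle_ineq2[of 1 "1 - g b (w b)"]
      by (simp add: norm_minus_commute)
  qed
qed

lemma generic_coef:
  fixes u :: "nat \<Rightarrow> nat" and t :: complex and \<alpha> :: "nat \<Rightarrow> complex"
  assumes inj: "inj_on u {1..d}" and t: "t \<noteq> 0" "cmod t < 1" and r: "r \<le> d"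
    and v: "(\<Sum>q\<in>{1..r}. cscale (\<alpha> q) (ebas (u q) + cscale t (ebas (d + 1 - q)))) \<in> Ecoord (d - r)"
  shows "\<forall>q\<in>{1..r}. \<alpha> q = 0"
proof (rule ccontr)
  let ?v = "(\<Sum>q\<in>{1..r}. cscale (\<alpha> q) (ebas (u q) + cscale t (ebas (d + 1 - q))))"
  assume nt: "\<not> (\<forall>q\<in>{1..r}. \<alpha> q = 0)"
  define Z where "Z = {q \<in> {1..r}. \<alpha> q \<noteq> 0}"
  have Zne: "Z \<noteq> {}" and Zf: "finite Z" using nt by (auto simp: Z_def)
  define m where "m = Min ((\<lambda>q. cmod (\<alpha> q)) ` Z)"
  have "m \<in> (\<lambda>q. cmod (\<alpha> q)) ` Z" unfolding m_def using Zne Zf by (intro Min_in) auto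
  then obtain q0 where q0: "q0 \<in> Z" "cmod (\<alpha> q0) = m" by auto
  have mle: "\<And>q. q \<in> Z \<Longrightarrow> m \<le> cmod (\<alpha> q)" unfolding m_def using Zf by (intro Min_le) auto
  have q0r: "q0 \<in> {1..r}" "\<alpha> q0 \<noteq> 0" using q0 by (auto simp: Z_def)
  define p where "p = d + 1 - q0"
  have p: "p \<notin> {1..d - r}" using q0r r by (auto simp: p_def)
  have vp: "?v p = 0" using v p by (simp add: Ecoord_iff)
  have coord: "?v p = (\<Sum>q\<in>{1..r}. if u q = p then \<alpha> q else 0) + t * \<alpha> q0"
  proof -
    have "?v p = (\<Sum>q\<in>{1..r}. (if u q = p then \<alpha> q else 0) + (if q = q0 then t * \<alpha> q0 else 0))"
      unfolding sum_cvec_apply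
    proof (rule sum.cong[OF refl])
      fix q assume q: "q \<in> {1..r}"
      have "(d + 1 - q = p) = (q = q0)" using q q0r r by (auto simp: p_def)
      then show "cscale (\<alpha> q) (ebas (u q) + cscale t (ebas (d + 1 - q))) p =
          (if u q = p then \<alpha> q else 0) + (if q = q0 then t * \<alpha> q0 else 0)"
        by (auto simp: cscale_apply ebas_def algebra_simps)
    qed
    also have "\<dots> = (\<Sum>q\<in>{1..r}. if u q = p then \<alpha> q else 0) + t * \<alpha> q0"
      using q0r by (simp add: sum.distrib)
    finally show ?thesis .
  qed
  show False
  proof (cases "\<exists>q'\<in>{1..r}. u q' = p")
    case False
    then have "(\<Sum>q\<in>{1..r}. if u q = p then \<alpha> q else 0) = 0" by (intro sum.neutral) auto
    then have "t * \<alpha> q0 = 0" using vp coord by simp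
    then show False using t q0r by simp
  next
    case True
    then obtain q' where q': "q' \<in> {1..r}" "u q' = p" by auto
    have "(\<Sum>q\<in>{1..r}. if u q = p then \<alpha> q else 0) = (\<Sum>q\<in>{1..r}. if q = q' then \<alpha> q' else 0)"
    proof (rule sum.cong[OF refl])
      fix q assume q: "q \<in> {1..r}"
      have "(u q = p) = (q = q')" using inj_onD[OF inj, of q q'] q q' r by auto
      then show "(if u q = p then \<alpha> q else 0) = (if q = q' then \<alpha> q' else 0)" by auto
    qed
    also have "\<dots> = \<alpha> q'" using q' by simp
    finally have "\<alpha> q' = - t * \<alpha> q0" using vp coord by (simp add: algebra_simps eq_neg_iff_add_eq_0)
    then have aq: "cmod (\<alpha> q') = cmod t * m" using q0 by (simp add: norm_mult)
    have "\<alpha> q' \<noteq> 0" using \<open>\<alpha> q' = - t * \<alpha> q0\<close> t q0r by simp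
    then have "q' \<in> Z" using q' by (simp add: Z_def)
    then have "m \<le> cmod t * m" using mle[of q'] aq by linarith
    moreover have "m > 0" using q0 q0r by auto
    ultimately show False using t by (simp add: mult_le_cancel_right1)
  qed
qed

definition posi :: "nat \<Rightarrow> nat \<Rightarrow> nat" where "posi i r = (if r < i then r else r + 1)"
definition uu :: "(nat \<Rightarrow> nat) \<Rightarrow> nat \<Rightarrow> nat \<Rightarrow> nat \<Rightarrow> nat" where
  "uu w i b r = (if posi i r = b then w i else w (posi i r))"
definition kap :: "nat \<Rightarrow> (nat \<Rightarrow> nat) \<Rightarrow> nat \<Rightarrow> nat \<Rightarrow> real \<Rightarrow> nat \<Rightarrow> cvec" where
  "kap n w i b t r = ebas (uu w i b r) + cscale (of_real t) (ebas (n - r))"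
definition HH :: "nat \<Rightarrow> (nat \<Rightarrow> nat) \<Rightarrow> nat \<Rightarrow> nat \<Rightarrow> (real \<Rightarrow> cvec) \<Rightarrow> real \<Rightarrow> nat \<Rightarrow> cvec" where
  "HH n w i b hb t l = (if l \<notin> {1..n} then 0 else if l = i then
     (if i = b then hb t else kap n w i b t (b - 1) + cscale (of_real t) (hb t))
     else if l = b then hb t else kap n w i b t (if l < i then l else l - 1))"

locale constr =
  fixes n s :: nat and w :: "nat \<Rightarrow> nat" and b i :: nat and hb :: "real \<Rightarrow> cvec"
  assumes n2: "n \<ge> 2" and s: "s \<ge> n - 1"
    and inj: "inj_on w {1..n}" and rng: "w ` {1..n} \<subseteq> {1..n + s - 1}"
    and b: "b \<in> {1..n}" "w b \<ge> n"
    and oth: "\<And>l. l \<in> {1..n} \<Longrightarrow> l \<noteq> b \<Longrightarrow> w l \<le> n - 1"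
    and i: "1 \<le> i" "i \<le> b"
    and hb_cont: "continuous_on UNIV hb" and hb0: "hb 0 = ebas (w b)"
    and hbCN: "\<And>t. 0 < t \<Longrightarrow> t < 1 \<Longrightarrow> hb t \<in> CN (n + s - 1)"
    and hbN: "\<And>t. 0 < t \<Longrightarrow> t < 1 \<Longrightarrow> hb t (n + s - 1) \<noteq> 0"
    and hbx: "\<And>t. 0 < t \<Longrightarrow> t < 1 \<Longrightarrow> xmap n (hb t) \<in> cspan (kap n w i b t ` {1..i - 1})"
begin

abbreviation "NN \<equiv> n + s - 1"
abbreviation "k t \<equiv> kap n w i b t"
abbreviation "h t \<equiv> HH n w i b hb t"

lemma NN: "NN \<ge> 2 * n - 2" "NN \<ge> n" using n2 s by auto

lemma wr: "l \<in> {1..n} \<Longrightarrow> w l \<in> {1..NN}" using rng by (auto simp: image_subset_iff)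

lemma posi: "r \<in> {1..n - 1} \<Longrightarrow> posi i r \<in> {1..n} \<and> posi i r \<noteq> i"
  using i b by (auto simp: posi_def)

lemma posi_inj: "inj_on (posi i) {1..n - 1}"
  by (auto simp: posi_def inj_on_def split: if_splits)

lemma uu_rng: "r \<in> {1..n - 1} \<Longrightarrow> uu w i b r \<in> {1..n - 1}"
proof -
  assume r: "r \<in> {1..n - 1}"
  note p = posi[OF r]
  show ?thesis
  proof (cases "posi i r = b")
    case True
    then have "i \<noteq> b" "i \<in> {1..n}" using p i b by auto
    then show ?thesis using True oth[of i] wr[of i] by (auto simp: uu_def)
  next
    case False
    then show ?thesis using p oth[of "posi i r"] wr[of "posi i r"] by (auto simp: uu_def)
  qed
qed

lemma uu_inj: "inj_on (uu w i b) {1..n - 1}"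
proof (rule inj_onI)
  fix r1 r2 assume r: "r1 \<in> {1..n - 1}" "r2 \<in> {1..n - 1}" "uu w i b r1 = uu w i b r2"
  note p1 = posi[OF r(1)] and p2 = posi[OF r(2)]
  have ib: "i \<in> {1..n}" using i b by auto
  have "posi i r1 = posi i r2"
  proof (cases "posi i r1 = b"; cases "posi i r2 = b")
    assume "posi i r1 = b" "posi i r2 = b" then show ?thesis by simp
  next
    assume c: "posi i r1 = b" "posi i r2 \<noteq> b"
    then have "w i = w (posi i r2)" using r by (simp add: uu_def)
    then have "i = posi i r2" using inj_onD[OF inj _ ib] p2 by auto
    then show ?thesis using p2 by simp
  next
    assume c: "posi i r1 \<noteq> b" "posi i r2 = b"
    then have "w (posi i r1) = w i" using r by (simp add: uu_def)
    then have "posi i r1 = i" using inj_onD[OF inj _ _ ib] p1 by auto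
    then show ?thesis using p1 by simp
  next
    assume c: "posi i r1 \<noteq> b" "posi i r2 \<noteq> b"
    then have "w (posi i r1) = w (posi i r2)" using r by (simp add: uu_def)
    then show ?thesis using inj_onD[OF inj] p1 p2 by auto
  qed
  then show "r1 = r2" using inj_onD[OF posi_inj] r by auto
qed

lemma k_E: "r \<in> {1..n - 1} \<Longrightarrow> k t r \<in> Ecoord (n - 1)"
proof -
  assume r: "r \<in> {1..n - 1}"
  have "ebas (uu w i b r) \<in> Ecoord (n - 1)" using uu_rng[OF r] by (auto simp: Ecoord_iff ebas_def)
  moreover have "ebas (n - r) \<in> Ecoord (n - 1)" using r by (auto simp: Ecoord_iff ebas_def)
  ultimately show ?thesis unfolding kap_def
    using subspace_Ecoord cv.subspace_add cv.subspace_scale by blast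
qed

lemma k_gen:
  assumes t: "0 < t" "t < 1" and r: "r \<le> n - 1"
    and v: "(\<Sum>q\<in>{1..r}. cscale (\<alpha> q) (k t q)) \<in> Ecoord (n - 1 - r)"
  shows "\<forall>q\<in>{1..r}. \<alpha> q = 0"
proof (rule generic_coef[OF uu_inj _ _ r])
  show "complex_of_real t \<noteq> 0" "cmod (complex_of_real t) < 1" using t by auto
  have "n - 1 + 1 = n" using n2 by simp
  then show "(\<Sum>q\<in>{1..r}. cscale (\<alpha> q) (ebas (uu w i b q) + cscale (complex_of_real t) (ebas (n - 1 + 1 - q))))
      \<in> Ecoord (n - 1 - r)" using v by (simp add: kap_def)
qed

lemma k_gen_set:
  assumes t: "0 < t" "t < 1" and r: "r \<le> n - 1"
    and v: "v \<in> cspan (k t ` {1..r})" "v \<in> Ecoord (n - 1 - r)"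
  shows "v = 0"
proof -
  obtain \<alpha> where a: "v = (\<Sum>q\<in>{1..r}. cscale (\<alpha> q) (k t q))" using span_index[OF _ v(1)] by auto
  then have "\<forall>q\<in>{1..r}. \<alpha> q = 0" using k_gen[OF t r] v(2) by simp
  then show ?thesis unfolding a by (simp add: cscale_zero)
qed

lemma k_indep:
  assumes t: "0 < t" "t < 1"
  shows "inj_on (k t) {1..n - 1} \<and> \<not> cdependent (k t ` {1..n - 1})"
proof (rule indep_index)
  fix \<alpha> assume "(\<Sum>q\<in>{1..n - 1}. cscale (\<alpha> q) (k t q)) = 0"
  then have "(\<Sum>q\<in>{1..n - 1}. cscale (\<alpha> q) (k t q)) \<in> Ecoord (n - 1 - (n - 1))"
    using Ecoord_0 by simp
  then show "\<forall>q\<in>{1..n - 1}. \<alpha> q = 0" by (rule k_gen[OF t order_refl])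
qed simp

lemma k_spanE:
  assumes t: "0 < t" "t < 1"
  shows "cspan (k t ` {1..n - 1}) = Ecoord (n - 1)"
proof (rule D3[where N = "n - 1"])
  show "cspan (k t ` {1..n - 1}) \<subseteq> Ecoord (n - 1)"
    using k_E by (intro cv.span_minimal subspace_Ecoord) auto
  show "Ecoord (n - 1) \<subseteq> CN (n - 1)" by (simp add: CN_Ecoord)
  have "cdim (cspan (k t ` {1..n - 1})) = card (k t ` {1..n - 1})"
    using k_indep[OF t] cv.dim_span_eq_card_independent by blast
  also have "\<dots> = n - 1" using k_indep[OF t] by (simp add: card_image)
  finally show "cdim (Ecoord (n - 1)) \<le> cdim (cspan (k t ` {1..n - 1}))" by (simp add: dim_Ecoord)
qed (auto simp: cv.subspace_span subspace_Ecoord)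

lemma ib: "i \<in> {1..n}" using i b by auto

lemma h_out: "l \<notin> {1..n} \<Longrightarrow> h t l = 0" by (simp add: HH_def)

lemma h_i: "h t i = (if i = b then hb t else k t (b - 1) + cscale (of_real t) (hb t))"
  using ib by (simp add: HH_def)

lemma h_b: "h t b = hb t"
  using b by (cases "b = i") (simp_all add: HH_def)

lemma idx:
  assumes "l \<in> {1..n}" "l \<noteq> i"
  shows "(if l < i then l else l - 1) \<in> {1..n - 1}" "posi i (if l < i then l else l - 1) = l"
  using assms i b by (auto simp: posi_def)

lemma h_k: "l \<in> {1..n} \<Longrightarrow> l \<noteq> i \<Longrightarrow> l \<noteq> b \<Longrightarrow> h t l = k t (if l < i then l else l - 1)"
  by (simp add: HH_def)

lemma posi_b: "r \<in> {1..n - 1} \<Longrightarrow> posi i r = b \<Longrightarrow> r = b - 1 \<and> i \<noteq> b"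
  using posi[of r] i by (auto simp: posi_def split: if_splits)

lemma k_in_h: "r \<in> {1..n - 1} \<Longrightarrow> k t r \<in> cspan (h t ` {1..n})"
proof -
  assume r: "r \<in> {1..n - 1}"
  note p = posi[OF r]
  show ?thesis
  proof (cases "posi i r = b")
    case False
    have "(if posi i r < i then posi i r else posi i r - 1) = r" by (auto simp: posi_def)
    then have "h t (posi i r) = k t r" using h_k[of "posi i r" t] p False by simp
    then show ?thesis using p by (metis cv.span_base imageI)
  next
    case True
    then have rb: "r = b - 1" "i \<noteq> b" using posi_b[OF r] by auto
    have hi: "h t i = k t (b - 1) + cscale (of_real t) (hb t)" using h_i[of t] rb by simp
    have "k t r = h t i - cscale (of_real t) (h t b)" by (simp add: hi h_b rb(1))
    moreover have "h t i \<in> cspan (h t ` {1..n})" using ib by (auto intro: cv.span_base)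
    moreover have "h t b \<in> cspan (h t ` {1..n})" using b by (auto intro: cv.span_base)
    ultimately show ?thesis by (simp add: cv.span_diff cv.span_scale)
  qed
qed

lemma E_CN: "Ecoord (n - 1) \<subseteq> CN NN"
proof -
  have "n - 1 \<le> NN" using NN by simp
  then show ?thesis using Ecoord_mono unfolding CN_Ecoord by blast
qed

lemma spanE_NN: "v \<in> Ecoord (n - 1) \<Longrightarrow> v NN = 0"
proof -
  assume v: "v \<in> Ecoord (n - 1)"
  have nn: "NN \<notin> {1..n - 1}" using NN(2) n2 by auto
  have "\<forall>k. k \<notin> {1..n - 1} \<longrightarrow> v k = 0" using v by (simp only: Ecoord_iff)
  then show "v NN = 0" using nn by blast
qed

lemma k_NN: "r \<in> {1..n - 1} \<Longrightarrow> k t r NN = 0"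
  using k_E[of r t] spanE_NN by blast

lemma h_CN:
  assumes t: "0 < t" "t < 1" and l: "l \<in> {1..n}"
  shows "h t l \<in> CN NN"
proof -
  have kc: "k t r \<in> CN NN" if "r \<in> {1..n - 1}" for r using k_E[OF that] E_CN by auto
  show ?thesis
  proof (cases "l = i")
    case True
    show ?thesis
    proof (cases "i = b")
      case True then show ?thesis using h_i[of t] hbCN[OF t] \<open>l = i\<close> by simp
    next
      case False
      then have "b - 1 \<in> {1..n - 1}" using i b by auto
      then have "k t (b - 1) \<in> CN NN" by (rule kc)
      moreover have "cscale (of_real t) (hb t) \<in> CN NN" using hbCN[OF t] subspace_CN cv.subspace_scale by blast
      ultimately show ?thesis using h_i[of t] False \<open>l = i\<close> subspace_CN cv.subspace_add by simp
    qed
  next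
    case False
    show ?thesis
    proof (cases "l = b")
      case True then show ?thesis using h_b hbCN[OF t] by simp
    next
      case False2: False
      then show ?thesis using h_k[OF l False False2] kc idx[OF l False] by simp
    qed
  qed
qed

lemma h_frames:
  assumes t: "0 < t" "t < 1"
  shows "h t \<in> frames n NN"
proof -
  have hbE: "hb t \<notin> cspan (k t ` {1..n - 1})"
    using k_spanE[OF t] spanE_NN hbN[OF t] by auto
  let ?S = "insert (hb t) (k t ` {1..n - 1})"
  have indS: "\<not> cdependent ?S" using cv.independent_insertI[OF hbE] k_indep[OF t] by auto
  have cS: "card ?S = n"
  proof -
    have "hb t \<notin> k t ` {1..n - 1}" using hbE cv.span_superset by blast
    then have "card ?S = card (k t ` {1..n - 1}) + 1" by simp
    also have "\<dots> = n" using k_indep[OF t] n2 by (simp add: card_image)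
    finally show ?thesis .
  qed
  have "hb t \<in> cspan (h t ` {1..n})" using b h_b[of t] by (metis cv.span_base imageI)
  then have Ssub: "?S \<subseteq> cspan (h t ` {1..n})" using k_in_h by auto
  have W: "\<not> cdependent (h t ` {1..n}) \<and> card (h t ` {1..n}) = n"
    by (rule spanning_indep[OF _ _ indS Ssub cS]) (auto intro: card_image_le[THEN order_trans])
  show ?thesis unfolding frames_def
    using W h_out h_CN[OF t] by (auto intro: eq_card_imp_inj_on)
qed

end

lemma wi_props:
  assumes "n \<ge> 2" "s \<ge> n - 1" "1 \<le> i" "i \<le> n"
  shows "inj_on (wi n s i) {1..n}" "wi n s i ` {1..n} \<subseteq> {1..n + s - 1}"
  using assms by (auto simp: wi_def inj_on_def split: if_splits)

context constr begin

definition zz :: "real \<Rightarrow> nat \<Rightarrow> cvec" where "zz t j = (if j < b then h t i else hb t)"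

lemma h_small: "j < i \<Longrightarrow> h t ` {1..j} = k t ` {1..j}"
proof (rule image_cong[OF refl])
  fix l assume "j < i" "l \<in> {1..j}"
  then have l: "l \<in> {1..n}" "l \<noteq> i" "l \<noteq> b" "l < i" using i b by auto
  then show "h t l = k t l" using h_k[OF l(1-3)] by simp
qed

lemma h_big:
  assumes j: "i \<le> j" "j \<le> n"
  shows "h t ` {1..j} \<subseteq> cspan (insert (zz t j) (k t ` {1..j - 1}))"
proof
  fix x assume "x \<in> h t ` {1..j}"
  then obtain l where l: "l \<in> {1..j}" "x = h t l" by auto
  have ln: "l \<in> {1..n}" using l j by auto
  let ?S = "insert (zz t j) (k t ` {1..j - 1})"
  show "x \<in> cspan ?S"
  proof (cases "l = i")
    case True
    show ?thesis
    proof (cases "i = b")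
      case True
      have z: "zz t j = hb t" using True j unfolding zz_def by auto
      have "x = hb t" using l \<open>l = i\<close> h_i[of t] True by simp
      then show ?thesis using z by (simp add: cv.span_base)
    next
      case False
      show ?thesis
      proof (cases "j < b")
        case True
        then have "x = zz t j" using l \<open>l = i\<close> by (simp add: zz_def)
        then show ?thesis by (simp add: cv.span_base)
      next
        case False2: False
        then have "zz t j = hb t" by (simp add: zz_def)
        moreover have "b - 1 \<in> {1..j - 1}" using False False2 i by auto
        ultimately have "k t (b - 1) \<in> cspan ?S" "hb t \<in> cspan ?S" by (auto intro: cv.span_base)
        moreover have "x = k t (b - 1) + cscale (of_real t) (hb t)" using l \<open>l = i\<close> h_i[of t] False by simp
        ultimately show ?thesis by (simp add: cv.span_add cv.span_scale)
      qed
    qed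
  next
    case False
    show ?thesis
    proof (cases "l = b")
      case True
      then have "\<not> j < b" using l by auto
      then have "x = zz t j" using l True h_b[of t] by (simp add: zz_def)
      then show ?thesis by (simp add: cv.span_base)
    next
      case False2: False
      have "x = k t (if l < i then l else l - 1)" using h_k[OF ln False False2] l by simp
      moreover have "(if l < i then l else l - 1) \<in> {1..j - 1}" using l j False i by auto
      ultimately show ?thesis by (auto intro: cv.span_base)
    qed
  qed
qed

lemma zz_props:
  assumes t: "0 < t" "t < 1" and j: "i \<le> j"
  shows "zz t j \<in> CN NN" "zz t j NN \<noteq> 0"
proof -
  show "zz t j \<in> CN NN"
    using h_CN[OF t ib] hbCN[OF t] by (simp add: zz_def)
  show "zz t j NN \<noteq> 0"
  proof (cases "j < b")
    case True
    then have ne: "i \<noteq> b" using j by auto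
    then have "b - 1 \<in> {1..n - 1}" using i b by auto
    then have "h t i NN = of_real t * hb t NN" using h_i[of t] ne k_NN by (simp add: cscale_apply)
    then show ?thesis using True t hbN[OF t] by (simp add: zz_def)
  next
    case False then show ?thesis using hbN[OF t] by (simp add: zz_def)
  qed
qed

lemma kspan_E: "j \<le> n \<Longrightarrow> cspan (k t ` {1..j - 1}) \<subseteq> Ecoord (n - 1)"
  using k_E by (intro cv.span_minimal subspace_Ecoord) auto

lemma decomp:
  assumes t: "0 < t" "t < 1" and j: "i \<le> j" "j \<le> n"
    and v: "v \<in> cspan (h t ` {1..j})" "v NN = 0"
  shows "v \<in> cspan (k t ` {1..j - 1})"
proof -
  have "cspan (h t ` {1..j}) \<subseteq> cspan (insert (zz t j) (k t ` {1..j - 1}))"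
    using h_big[OF j] cv.span_minimal cv.subspace_span by blast
  then have "v \<in> cspan (insert (zz t j) (k t ` {1..j - 1}))" using v by blast
  then obtain c where c: "v - cscale c (zz t j) \<in> cspan (k t ` {1..j - 1})"
    using cv.span_breakdown_eq by blast
  then have "(v - cscale c (zz t j)) NN = 0" using kspan_E[OF j(2)] spanE_NN by blast
  then have "c * zz t j NN = 0" using v(2) by (simp add: cscale_apply)
  then have "c = 0" using zz_props[OF t j(1)] by simp
  then show ?thesis using c by (simp add: cscale_zero)
qed

lemma flag_h: "j \<le> n \<Longrightarrow> flag_of n (h t) j = cspan (h t ` {1..j})"
  by (simp add: flag_of_def min_absorb1)

lemma span_h_CN: "0 < t \<Longrightarrow> t < 1 \<Longrightarrow> j \<le> n \<Longrightarrow> cspan (h t ` {1..j}) \<subseteq> CN NN"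
  using h_CN by (intro span_CN) auto

lemma E_zero: "v \<in> Ecoord m \<Longrightarrow> q \<notin> {1..m} \<Longrightarrow> v q = 0"
  by (simp add: Ecoord_iff)

lemma h_jump:
  assumes t: "0 < t" "t < 1" and j: "j \<le> n" and J: "jump (flag_of n (h t) j) m"
  shows "m \<in> wi n s i ` {1..j}"
proof -
  obtain v where v: "v \<in> cspan (h t ` {1..j})" "v \<in> Ecoord m" "v m \<noteq> 0"
    using J flag_h[OF j] by (auto simp: jump_def)
  have m1: "1 \<le> m" using v E_zero[of v m m] by (cases "m = 0") auto
  have vCN: "v \<in> CN NN" using span_h_CN[OF t j] v(1) by auto
  have mN: "m \<le> NN" using vCN v(3) by (auto simp: CN_def)
  show ?thesis
  proof (cases "j < i")
    case True
    have vk: "v \<in> cspan (k t ` {1..j})" using v(1) h_small[OF True] by simp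
    have jn: "j \<le> n - 1" using True i b by auto
    have sj: "Suc j \<le> n" using jn n2 by auto
    have "v \<in> Ecoord (n - 1)" using vk kspan_E[OF sj, of t] by auto
    then have mn: "m \<le> n - 1" using v(3) E_zero[of v "n - 1" m] m1 by fastforce
    have mlow: "m > n - 1 - j"
    proof (rule ccontr)
      assume "\<not> m > n - 1 - j"
      then have "v \<in> Ecoord (n - 1 - j)" using v(2) Ecoord_mono[of m "n - 1 - j"] by auto
      then have "v = 0" using k_gen_set[OF t jn vk] by simp
      then show False using v(3) by simp
    qed
    let ?l = "n - m"
    have l: "?l \<in> {1..j}" "?l < i" using mn mlow m1 True by auto
    have "wi n s i ?l = m" using l mn by (simp add: wi_def)
    then show ?thesis using l by (metis image_eqI)
  next
    case False
    then have ij: "i \<le> j" by simp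
    show ?thesis
    proof (cases "m = NN")
      case True
      have "wi n s i i = m" using True by (simp add: wi_def)
      then show ?thesis using ij i by (metis atLeastAtMost_iff image_eqI)
    next
      case False2: False
      then have "NN \<notin> {1..m}" using mN by auto
      then have "v NN = 0" using E_zero[OF v(2)] by blast
      then have vk: "v \<in> cspan (k t ` {1..j - 1})" by (rule decomp[OF t ij j v(1)])
      have jn: "j - 1 \<le> n - 1" using j by auto
      have "v \<in> Ecoord (n - 1)" using vk kspan_E[OF j] by auto
      then have mn: "m \<le> n - 1" using v(3) E_zero[of v "n - 1" m] m1 by fastforce
      have mlow: "m > n - j"
      proof (rule ccontr)
        assume "\<not> m > n - j"
        moreover have e: "n - 1 - (j - 1) = n - j" using ij i by auto
        ultimately have "v \<in> Ecoord (n - 1 - (j - 1))" using v(2) Ecoord_mono[of m "n - j"] by auto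
        then have "v = 0" using k_gen_set[OF t jn vk] by simp
        then show False using v(3) by simp
      qed
      show ?thesis
      proof (cases "n - m < i")
        case True
        let ?l = "n - m"
        have l: "?l \<in> {1..j}" using mn mlow m1 True ij by auto
        have "wi n s i ?l = m" using True mn by (simp add: wi_def)
        then show ?thesis using l by (metis image_eqI)
      next
        case False3: False
        let ?l = "n + 1 - m"
        have l: "?l \<in> {1..j}" "?l > i" using mn mlow m1 False3 ij by auto
        have "wi n s i ?l = m" using l mn by (simp add: wi_def)
        then show ?thesis using l by (metis image_eqI)
      qed
    qed
  qed
qed

lemma h_cell:
  assumes t: "0 < t" "t < 1"
  shows "flag_of n (h t) \<in> schubert_cell n NN (wi n s i)"
proof (rule cell_from_jumps[OF frames_Fl[OF h_frames[OF t]]])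
  have "i \<le> n" using i b by auto
  then show "inj_on (wi n s i) {1..n}" "wi n s i ` {1..n} \<subseteq> {1..NN}"
    using wi_props[OF n2 s i(1)] by auto
  show "\<And>j m. j \<le> n \<Longrightarrow> jump (flag_of n (h t) j) m \<Longrightarrow> m \<in> wi n s i ` {1..j}"
    by (rule h_jump[OF t])
qed

lemma h_Y:
  assumes t: "0 < t" "t < 1"
  shows "flag_of n (h t) \<in> DeltaY n s"
  unfolding DeltaY_def
proof (intro CollectI conjI allI impI)
  show "flag_of n (h t) \<in> Fl n NN" by (rule frames_Fl[OF h_frames[OF t]])
  have "xmap n ` CN NN \<subseteq> Ecoord (n - 1)" using xmap_in_E by auto
  also have "\<dots> = cspan (k t ` {1..n - 1})" using k_spanE[OF t] by simp
  also have "\<dots> \<subseteq> cspan (h t ` {1..n})" using k_in_h by (intro cv.span_minimal cv.subspace_span) auto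
  finally show "xmap n ` CN NN \<subseteq> flag_of n (h t) n" using flag_h[of n t] by simp
next
  fix j assume j: "j \<le> n"
  have hbx': "xmap n (hb t) \<in> cspan (h t ` {1..j})" if "i \<le> j"
  proof -
    have "xmap n (hb t) \<in> cspan (h t ` {1..i - 1})" using hbx[OF t] h_small[of "i - 1" t] i by simp
    moreover have "cspan (h t ` {1..i - 1}) \<subseteq> cspan (h t ` {1..j})" using that by (intro cv.span_mono) auto
    ultimately show ?thesis by auto
  qed
  have "xmap n ` cspan (h t ` {1..j}) \<subseteq> cspan (h t ` {1..j})"
  proof (rule xmap_span[OF cv.subspace_span])
    show "xmap n ` h t ` {1..j} \<subseteq> cspan (h t ` {1..j})"
    proof
      fix y assume "y \<in> xmap n ` h t ` {1..j}"
      then obtain l where l: "l \<in> {1..j}" "y = xmap n (h t l)" by auto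
      have ln: "l \<in> {1..n}" using l j by auto
      show "y \<in> cspan (h t ` {1..j})"
      proof (cases "l = i")
        case True
        then have ij: "i \<le> j" using l by auto
        show ?thesis
        proof (cases "i = b")
          case True
          then show ?thesis using l \<open>l = i\<close> h_i[of t] hbx'[OF ij] by simp
        next
          case False
          then have "b - 1 \<in> {1..n - 1}" using i b by auto
          then have "xmap n (k t (b - 1)) = 0" using k_E xmap_kill by blast
          then have "y = cscale (of_real t) (xmap n (hb t))"
            using l \<open>l = i\<close> h_i[of t] False by (simp add: xmap_add xmap_scale)
          then show ?thesis using hbx'[OF ij] by (simp add: cv.span_scale)
        qed
      next
        case False
        show ?thesis
        proof (cases "l = b")
          case True
          then have ij: "i \<le> j" using l i by auto
          then show ?thesis using l True h_b[of t] hbx'[OF ij] by simp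
        next
          case False2: False
          have "h t l = k t (if l < i then l else l - 1)" by (rule h_k[OF ln False False2])
          then have "y = 0" using l k_E[OF idx(1)[OF ln False]] xmap_kill by metis
          then show ?thesis by (simp add: cv.span_zero)
        qed
      qed
    qed
  qed
  then show "xmap n ` flag_of n (h t) j \<subseteq> flag_of n (h t) j" using flag_h[OF j] by simp
qed

lemma kap0: "kap n w i b 0 r = ebas (uu w i b r)"
  by (simp add: kap_def cscale_zero)

lemma h_cont: "continuous_on UNIV (\<lambda>t. h t)"
proof (intro continuous_on_coordinatewise_then_product)
  fix l q
  have hbq: "continuous_on UNIV (\<lambda>t. hb t q)"
    by (rule continuous_on_product_then_coordinatewise[OF hb_cont])
  have kq: "continuous_on UNIV (\<lambda>t. k t r q)" for r
    unfolding kap_def by (auto simp: cscale_apply intro!: continuous_intros)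
  show "continuous_on UNIV (\<lambda>t. h t l q)"
  proof (cases "l \<in> {1..n}")
    case False then show ?thesis by (simp add: HH_def)
  next
    case True
    show ?thesis
    proof (cases "l = i")
      case True
      show ?thesis
      proof (cases "i = b")
        case True then show ?thesis using \<open>l = i\<close> h_i hbq by simp
      next
        case False
        have eq: "(\<lambda>t. h t l q) = (\<lambda>t. k t (b - 1) q + of_real t * hb t q)"
          using \<open>l = i\<close> h_i False by (simp add: cscale_apply)
        show ?thesis unfolding eq by (intro continuous_intros kq hbq)
      qed
    next
      case False
      show ?thesis
      proof (cases "l = b")
        case True then show ?thesis using h_b hbq by simp
      next
        case False2: False
        have eq: "(\<lambda>t. h t l q) = (\<lambda>t. k t (if l < i then l else l - 1) q)"
          using h_k[OF \<open>l \<in> {1..n}\<close> False False2] by simp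
        show ?thesis unfolding eq by (rule kq)
      qed
    qed
  qed
qed

lemma h0: "h 0 = f0 n w"
proof
  fix l
  show "h 0 l = f0 n w l"
  proof (cases "l \<in> {1..n}")
    case False
    have "f0 n w l = 0" unfolding f0_def if_not_P[OF False] ..
    then show ?thesis using h_out[OF False] by simp
  next
    case True
    show ?thesis
    proof (cases "l = i")
      case True
      show ?thesis
      proof (cases "i = b")
        case True then show ?thesis using \<open>l = i\<close> h_i hb0 ib by (simp add: f0_def)
      next
        case False
        then have "posi i (b - 1) = b" using i b by (auto simp: posi_def)
        then have "uu w i b (b - 1) = w i" by (simp add: uu_def)
        then show ?thesis using \<open>l = i\<close> h_i[of 0] False ib by (simp add: f0_def kap0 cscale_zero)
      qed
    next
      case False
      show ?thesis
      proof (cases "l = b")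
        case True then show ?thesis using h_b hb0 b by (simp add: f0_def)
      next
        case False2: False
        have "uu w i b (if l < i then l else l - 1) = w l"
          using idx(2)[OF \<open>l \<in> {1..n}\<close> False] False2 by (simp add: uu_def)
        then show ?thesis using h_k[OF \<open>l \<in> {1..n}\<close> False False2, of 0] \<open>l \<in> {1..n}\<close>
          by (simp add: kap0 f0_def)
      qed
    qed
  qed
qed

lemma sufficiency:
  assumes VY: "perm_flag n w \<in> DeltaY n s"
  shows "perm_flag n w \<in> Kcomp n s i"
proof -
  have "flag_of n (h 0) \<in> Kcomp n s i"
  proof (rule closure_by_curve[OF h_cont])
    show "h 0 \<in> frames n NN" unfolding h0 by (rule f0_frames[OF inj rng])
    show "flag_of n (h 0) \<in> DeltaY n s" unfolding h0 flag_f0 by (rule VY)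
    show "\<And>t. 0 < t \<Longrightarrow> t < 1 \<Longrightarrow> h t \<in> frames n NN \<and>
        flag_of n (h t) \<in> schubert_cell n NN (wi n s i) \<inter> DeltaY n s"
      using h_frames h_cell h_Y by blast
  qed
  then show ?thesis unfolding h0 flag_f0 .
qed

end

definition hb1 :: "nat \<Rightarrow> nat \<Rightarrow> (nat \<Rightarrow> nat) \<Rightarrow> nat \<Rightarrow> nat \<Rightarrow> nat \<Rightarrow> real \<Rightarrow> cvec" where
  "hb1 n s w i b a t = (\<lambda>m. if n \<le> m \<and> m \<le> 2 * n - 2
      then (kap n w i b t a + cscale (of_real t) (kap n w i b t 1)) (m - (n - 1))
      else if m = n + s - 1 then of_real t else 0)"

definition hb2 :: "nat \<Rightarrow> nat \<Rightarrow> real \<Rightarrow> cvec" where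
  "hb2 c N t = ebas c + cscale (of_real t) (ebas N)"

lemma hb1_ok:
  assumes n2: "n \<ge> 2" and s: "s \<ge> n - 1"
    and inj: "inj_on w {1..n}" and rng: "w ` {1..n} \<subseteq> {1..n + s - 1}"
    and b: "b \<in> {1..n}" "w b \<ge> n" "w b \<le> 2 * n - 2"
    and oth: "\<And>l. l \<in> {1..n} \<Longrightarrow> l \<noteq> b \<Longrightarrow> w l \<le> n - 1"
    and a: "a \<in> {1..n}" "w a = w b - (n - 1)" "a < i"
    and i: "i \<le> b"
  shows "constr n s w b i (hb1 n s w i b a)"
proof -
  let ?y = "\<lambda>t. kap n w i b t a + cscale (of_real t) (kap n w i b t 1)"
  have i1: "1 \<le> i" using a by auto
  have wr: "\<And>l. l \<in> {1..n} \<Longrightarrow> w l \<in> {1..n + s - 1}" using rng by (auto simp: image_subset_iff)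
  have uu_small: "uu w i b r = w r" if "r \<in> {1..i - 1}" for r
    using that i by (auto simp: uu_def posi_def)
  have wsmall: "w r \<in> {1..n - 1}" if "r \<in> {1..i - 1}" for r
    using that oth[of r] wr[of r] i b by auto
  have a1: "a \<in> {1..i - 1}" "1 \<in> {1..i - 1}" using a by auto
  have kapE: "kap n w i b t r q = 0" if "r \<in> {1..i - 1}" "q \<notin> {1..n - 1}" for t r q
    using that uu_small[OF that(1)] wsmall[OF that(1)] i b
    by (auto simp: kap_def ebas_def cscale_apply)
  have yE: "?y t q = 0" if "q \<notin> {1..n - 1}" for t q
    using kapE[OF a1(1) that] kapE[OF a1(2) that] by (simp add: cscale_apply)
  have xy: "xmap n (hb1 n s w i b a t) = ?y t" for t
  proof
    fix q
    show "xmap n (hb1 n s w i b a t) q = ?y t q"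
    proof (cases "q \<in> {1..n - 1}")
      case True
      then have "n \<le> q + (n - 1) \<and> q + (n - 1) \<le> 2 * n - 2" "q + (n - 1) - (n - 1) = q" by auto
      then show ?thesis using True by (simp add: xmap_def hb1_def)
    next
      case False
      then show ?thesis using yE[OF False] by (auto simp: xmap_def)
    qed
  qed
  show ?thesis
  proof (unfold_locales)
    show "n \<ge> 2" "s \<ge> n - 1" "inj_on w {1..n}" "w ` {1..n} \<subseteq> {1..n + s - 1}" "b \<in> {1..n}"
      "w b \<ge> n" "1 \<le> i" "i \<le> b" using assms i1 by auto
    show "\<And>l. l \<in> {1..n} \<Longrightarrow> l \<noteq> b \<Longrightarrow> w l \<le> n - 1" by (rule oth)
  next
    show "continuous_on UNIV (hb1 n s w i b a)"
    proof (intro continuous_on_coordinatewise_then_product)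
      fix m
      show "continuous_on UNIV (\<lambda>t. hb1 n s w i b a t m)"
        unfolding hb1_def kap_def
        by (cases "n \<le> m \<and> m \<le> 2 * n - 2"; cases "m = n + s - 1")
          (auto simp: cscale_apply intro!: continuous_intros)
    qed
  next
    show "hb1 n s w i b a 0 = ebas (w b)"
    proof
      fix m
      have y0: "?y 0 = ebas (w a)" using uu_small[OF a1(1)] by (simp add: kap_def cscale_zero)
      show "hb1 n s w i b a 0 m = ebas (w b) m"
      proof (cases "n \<le> m \<and> m \<le> 2 * n - 2")
        case True
        then have "(m - (n - 1) = w a) = (m = w b)" using a b by auto
        then show ?thesis using True y0 by (simp add: hb1_def ebas_def)
      next
        case False
        then have "m \<noteq> w b" using b by auto
        then show ?thesis unfolding hb1_def if_not_P[OF False] by (simp add: ebas_def)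
      qed
    qed
  next
    fix t :: real assume t: "0 < t" "t < 1"
    show "hb1 n s w i b a t \<in> CN (n + s - 1)"
      using n2 s by (auto simp: CN_def hb1_def)
    show "xmap n (hb1 n s w i b a t) \<in> cspan (kap n w i b t ` {1..i - 1})"
      unfolding xy using a1 by (intro cv.span_add cv.span_scale cv.span_base) auto
    show "hb1 n s w i b a t (n + s - 1) \<noteq> 0"
    proof (cases "n + s - 1 \<le> 2 * n - 2")
      case False then show ?thesis using t by (simp add: hb1_def)
    next
      case True
      then have N: "n + s - 1 = 2 * n - 2" using s by auto
      have an: "(n - 1 = n - a) = (a = 1)" using a(1) by auto
      have c: "n \<le> 2 * n - 2 \<and> 2 * n - 2 \<le> 2 * n - 2" and e: "2 * n - 2 - (n - 1) = n - 1" using n2 by auto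
      have "hb1 n s w i b a t (n + s - 1) = ?y t (n - 1)" unfolding hb1_def N if_P[OF c] e ..
      also have "\<dots> = of_real ((if w a = n - 1 then 1 else 0) + t * (if a = 1 then 1 else 0)
          + t * (if w 1 = n - 1 then 1 else 0) + t * t)"
        using uu_small[OF a1(1)] uu_small[OF a1(2)] n2 an
        by (simp add: kap_def ebas_def cscale_apply algebra_simps)
      also have "\<dots> \<noteq> 0"
      proof -
        have "(if w a = n - 1 then 1 else 0) + t * (if a = 1 then 1 else 0)
          + t * (if w 1 = n - 1 then 1 else 0) + t * t > (0::real)"
          using t by (auto intro!: add_nonneg_pos add_pos_nonneg)
        then show ?thesis by (simp only: of_real_eq_0_iff)
      qed
      finally show ?thesis .
    qed
  qed
qed

lemma hb2_ok:
  assumes n2: "n \<ge> 2" and s: "s \<ge> n - 1"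
    and inj: "inj_on w {1..n}" and rng: "w ` {1..n} \<subseteq> {1..n + s - 1}"
    and b: "b \<in> {1..n}" "w b \<ge> 2 * n - 1"
    and oth: "\<And>l. l \<in> {1..n} \<Longrightarrow> l \<noteq> b \<Longrightarrow> w l \<le> n - 1"
    and i: "1 \<le> i" "i \<le> b"
  shows "constr n s w b i (hb2 (w b) (n + s - 1))"
proof -
  have wb: "w b \<le> n + s - 1" using rng b by (auto simp: image_subset_iff)
  show ?thesis
  proof (unfold_locales)
    show "n \<ge> 2" "s \<ge> n - 1" "inj_on w {1..n}" "w ` {1..n} \<subseteq> {1..n + s - 1}" "b \<in> {1..n}"
      "w b \<ge> n" "1 \<le> i" "i \<le> b" using assms by auto
    show "\<And>l. l \<in> {1..n} \<Longrightarrow> l \<noteq> b \<Longrightarrow> w l \<le> n - 1" by (rule oth)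
  next
    show "continuous_on UNIV (hb2 (w b) (n + s - 1))"
    proof (intro continuous_on_coordinatewise_then_product)
      fix m show "continuous_on UNIV (\<lambda>t. hb2 (w b) (n + s - 1) t m)"
        unfolding hb2_def by (auto simp: cscale_apply intro!: continuous_intros)
    qed
  next
    show "hb2 (w b) (n + s - 1) 0 = ebas (w b)" by (simp add: hb2_def cscale_zero)
  next
    fix t :: real assume t: "0 < t" "t < 1"
    show "hb2 (w b) (n + s - 1) t \<in> CN (n + s - 1)"
      using wb b n2 by (auto simp: CN_def hb2_def ebas_def cscale_apply)
    have "xmap n (hb2 (w b) (n + s - 1) t) = 0"
      using b wb by (auto simp: xmap_def hb2_def ebas_def cscale_apply fun_eq_iff)
    then show "xmap n (hb2 (w b) (n + s - 1) t) \<in> cspan (kap n w i b t ` {1..i - 1})"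
      by (simp add: cv.span_zero)
    have "hb2 (w b) (n + s - 1) t (n + s - 1) = of_real ((if w b = n + s - 1 then 1 else 0) + t)"
      by (simp add: hb2_def ebas_def cscale_apply)
    moreover have "(if w b = n + s - 1 then 1 else 0) + t > 0" using t by auto
    ultimately show "hb2 (w b) (n + s - 1) t (n + s - 1) \<noteq> 0"
      by (metis less_irrefl of_real_eq_0_iff)
  qed
qed

theorem corollary3p8:
  fixes n s :: nat and w :: "nat \<Rightarrow> nat"
  assumes "n \<ge> 2" and "s \<ge> n - 1"
    and "inj_on w {1..n}" and "w ` {1..n} \<subseteq> {1..n + s - 1}"
    and "perm_flag n w \<in> DeltaY n s"
  shows "(\<exists>!b. b \<in> {1..n} \<and> w b \<ge> n)
    \<and> (\<forall>b\<in>{1..n}. w b \<ge> n \<longrightarrow>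
         w ` ({1..n} - {b}) = {1..n - 1}
       \<and> (w b \<le> 2 * n - 2 \<longrightarrow>
            (\<exists>a\<in>{1..n}. w a = w b - (n - 1))
          \<and> (\<forall>a\<in>{1..n}. w a = w b - (n - 1) \<longrightarrow> a < b
               \<and> (\<forall>i. admissible n s i \<longrightarrow>
                     (perm_flag n w \<in> Kcomp n s i \<longleftrightarrow> a < i \<and> i \<le> b))))
       \<and> (w b \<ge> 2 * n - 1 \<longrightarrow>
            (\<forall>i. admissible n s i \<longrightarrow> (perm_flag n w \<in> Kcomp n s i \<longleftrightarrow> i \<le> b))))"
proof -
  note A = assms
  have n2: "n \<ge> 2" and s: "s \<ge> n - 1" and inj: "inj_on w {1..n}"
    and rng: "w ` {1..n} \<subseteq> {1..n + s - 1}" and VY: "perm_flag n w \<in> DeltaY n s" using assms by auto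
  have VF: "perm_flag n w \<in> Fl n (n + s - 1)" using VY by (simp add: DeltaY_def)
  have adm: "1 \<le> i \<and> i \<le> n" if "admissible n s i" for i
    using that by (auto simp: admissible_def split: if_splits)
  have part2: "w ` ({1..n} - {b}) = {1..n - 1}
       \<and> (w b \<le> 2 * n - 2 \<longrightarrow>
            (\<exists>a\<in>{1..n}. w a = w b - (n - 1))
          \<and> (\<forall>a\<in>{1..n}. w a = w b - (n - 1) \<longrightarrow> a < b
               \<and> (\<forall>i. admissible n s i \<longrightarrow>
                     (perm_flag n w \<in> Kcomp n s i \<longleftrightarrow> a < i \<and> i \<le> b))))
       \<and> (w b \<ge> 2 * n - 1 \<longrightarrow>
            (\<forall>i. admissible n s i \<longrightarrow> (perm_flag n w \<in> Kcomp n s i \<longleftrightarrow> i \<le> b)))"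
    if b: "b \<in> {1..n}" "w b \<ge> n" for b
  proof -
    have wset: "w ` ({1..n} - {b}) = {1..n - 1}" by (rule perm_Y_b(2)[OF A b])
    have oth: "w l \<le> n - 1" if "l \<in> {1..n}" "l \<noteq> b" for l
    proof -
      have "w l \<in> w ` ({1..n} - {b})" using that by auto
      then show ?thesis using wset by auto
    qed
    have notA: "perm_flag n w \<notin> Kcomp n s i" if i: "1 \<le> i" "i \<le> n" "b < i" for i
    proof (rule nonclosure_A[OF n2 s i(1,2) VF])
      have "ebas (w b) \<in> perm_flag n w (i - 1)"
        using b i by (auto simp: perm_flag_def intro!: cv.span_base)
      moreover have "ebas (w b) \<notin> Ecoord (n - 1)"
      proof
        assume "ebas (w b) \<in> Ecoord (n - 1)"
        moreover have "w b \<notin> {1..n - 1}" using b by auto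
        ultimately have "ebas (w b) (w b) = 0" by (simp add: Ecoord_iff)
        then show False by (simp add: ebas_def)
      qed
      ultimately show "\<not> perm_flag n w (i - 1) \<subseteq> Ecoord (n - 1)" by blast
    qed
    show ?thesis
    proof (intro conjI impI)
      show "w ` ({1..n} - {b}) = {1..n - 1}" by (rule wset)
    next
      assume c: "w b \<le> 2 * n - 2"
      show "\<exists>a\<in>{1..n}. w a = w b - (n - 1)" by (rule perm_Y_a(1)[OF A b c])
      show "\<forall>a\<in>{1..n}. w a = w b - (n - 1) \<longrightarrow> a < b
               \<and> (\<forall>i. admissible n s i \<longrightarrow>
                     (perm_flag n w \<in> Kcomp n s i \<longleftrightarrow> a < i \<and> i \<le> b))"
      proof (intro ballI impI conjI allI)
        fix a assume a: "a \<in> {1..n}" "w a = w b - (n - 1)"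
        show ab: "a < b" by (rule perm_Y_a(2)[OF A b c a])
        fix i assume "admissible n s i"
        then have i: "1 \<le> i" "i \<le> n" using adm by auto
        show "perm_flag n w \<in> Kcomp n s i \<longleftrightarrow> a < i \<and> i \<le> b"
        proof (cases "a < i \<and> i \<le> b")
          case True
          have "constr n s w b i (hb1 n s w i b a)"
            by (rule hb1_ok[OF n2 s inj rng b c oth]) (use a True in auto)
          then have "perm_flag n w \<in> Kcomp n s i" by (rule constr.sufficiency[OF _ VY])
          then show ?thesis using True by simp
        next
          case False
          show ?thesis
          proof (cases "b < i")
            case True then show ?thesis using notA[OF i True] by simp
          next
            case False2: False
            then have "i \<le> a" using False by auto
            then have "perm_flag n w \<notin> Kcomp n s i"
              using nonclosure_B[OF n2 s inj rng b c a ab oth i(1)] by auto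
            then show ?thesis using False by simp
          qed
        qed
      qed
    next
      assume c: "w b \<ge> 2 * n - 1"
      show "\<forall>i. admissible n s i \<longrightarrow> (perm_flag n w \<in> Kcomp n s i \<longleftrightarrow> i \<le> b)"
      proof (intro allI impI)
        fix i assume "admissible n s i"
        then have i: "1 \<le> i" "i \<le> n" using adm by auto
        show "perm_flag n w \<in> Kcomp n s i \<longleftrightarrow> i \<le> b"
        proof (cases "i \<le> b")
          case True
          have "constr n s w b i (hb2 (w b) (n + s - 1))"
            by (rule hb2_ok[OF n2 s inj rng b(1) c oth i(1) True])
          then have "perm_flag n w \<in> Kcomp n s i" by (rule constr.sufficiency[OF _ VY])
          then show ?thesis using True by simp
        next
          case False
          then show ?thesis using notA[OF i] by simp
        qed
      qed
    qed
  qed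
  show ?thesis using perm_Y_b(1)[OF A] part2 by blast
qed

end
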